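(* Let $K$ be a field, $q\in K\setminus\{0\}$ not a root of unity, and let $A=K\langle a,b\rangle/(ab-qba)$ be the coordinate ring of the quantum plane. Let $w=ab$ (a normal element), and let $\sigma$ be the automorphism of $A$ with $\sigma(a)=q^{-1}a$, $\sigma(b)=qb$, so that $wy=\sigma(y)w$ for all $y\in A$. Let $J=A(ab-1)$ and $x=a-1$. Then: (a) $J$ is a maximal left ideal of $A$, and for every $m\ge 0$ there is no $c\in A$ with $\sigma^m(x)c-1\in J$; (b) the left $A$-module $N=A/Ax$ is not artinian, and its nonzero submodules are exactly the modules $w^mN$, $m\ge 0$, which form a strictly descending chain $N\supsetneq wN\supsetneq w^2N\supsetneq\cdots$. *)

theory Defs
  imports Main "HOL-Library.Function_Algebras"
begin

text \<open>Concrete model of the quantum plane A = K<a,b>/(ab - q ba) over a field K: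
  an element is a finitely supported coefficient function on the PBW basis
  a^i b^j, indexed by (i,j).  Multiplication:
  (a^i b^j)(a^k b^l) = q^(-(j k)) a^(i+k) b^(j+l), which encodes ab = q ba.\<close>

definition qp_carrier :: "(nat \<times> nat \<Rightarrow> 'k::field) set" where
  "qp_carrier = {f. finite {p. f p \<noteq> 0}}"

definition qp_mult :: "'k::field \<Rightarrow> (nat \<times> nat \<Rightarrow> 'k) \<Rightarrow> (nat \<times> nat \<Rightarrow> 'k) \<Rightarrow> (nat \<times> nat \<Rightarrow> 'k)" where
  "qp_mult q f g = (\<lambda>(n, m). \<Sum>i\<le>n. \<Sum>j\<le>m.
      f (i, j) * g (n - i, m - j) * inverse q ^ (j * (n - i)))"

definition qp_mon :: "nat \<Rightarrow> nat \<Rightarrow> (nat \<times> nat \<Rightarrow> 'k::field)" where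
  "qp_mon i j = (\<lambda>p. if p = (i, j) then 1 else 0)"

abbreviation qp_one :: "nat \<times> nat \<Rightarrow> 'k::field" where "qp_one \<equiv> qp_mon 0 0"
abbreviation qp_a :: "nat \<times> nat \<Rightarrow> 'k::field" where "qp_a \<equiv> qp_mon 1 0"
abbreviation qp_b :: "nat \<times> nat \<Rightarrow> 'k::field" where "qp_b \<equiv> qp_mon 0 1"

primrec qp_pow :: "'k::field \<Rightarrow> (nat \<times> nat \<Rightarrow> 'k) \<Rightarrow> nat \<Rightarrow> (nat \<times> nat \<Rightarrow> 'k)" where
  "qp_pow q f 0 = qp_one"
| "qp_pow q f (Suc n) = qp_mult q (qp_pow q f n) f"

definition qp_w :: "'k::field \<Rightarrow> nat \<times> nat \<Rightarrow> 'k" where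
  "qp_w q = qp_mult q qp_a qp_b"

definition qp_sigma :: "'k::field \<Rightarrow> (nat \<times> nat \<Rightarrow> 'k) \<Rightarrow> (nat \<times> nat \<Rightarrow> 'k)" where
  "qp_sigma q f = (\<lambda>(i, j). inverse q ^ i * q ^ j * f (i, j))"

definition not_root_of_unity :: "'k::field \<Rightarrow> bool" where
  "not_root_of_unity q \<longleftrightarrow> (\<forall>n>0. q ^ n \<noteq> 1)"

definition qp_left_ideal :: "'k::field \<Rightarrow> (nat \<times> nat \<Rightarrow> 'k) set \<Rightarrow> bool" where
  "qp_left_ideal q L \<longleftrightarrow> L \<subseteq> qp_carrier \<and> 0 \<in> L
     \<and> (\<forall>u\<in>L. \<forall>v\<in>L. u + v \<in> L)
     \<and> (\<forall>r\<in>qp_carrier. \<forall>u\<in>L. qp_mult q r u \<in> L)"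

definition qp_maximal_left_ideal :: "'k::field \<Rightarrow> (nat \<times> nat \<Rightarrow> 'k) set \<Rightarrow> bool" where
  "qp_maximal_left_ideal q L \<longleftrightarrow> qp_left_ideal q L \<and> L \<noteq> qp_carrier
     \<and> (\<forall>L'. qp_left_ideal q L' \<and> L \<subseteq> L' \<longrightarrow> L' = L \<or> L' = qp_carrier)"

definition qp_lprincipal :: "'k::field \<Rightarrow> (nat \<times> nat \<Rightarrow> 'k) \<Rightarrow> (nat \<times> nat \<Rightarrow> 'k) set" where
  "qp_lprincipal q y = {qp_mult q c y | c. c \<in> qp_carrier}"

definition qp_cls :: "(nat \<times> nat \<Rightarrow> 'k::field) set \<Rightarrow> (nat \<times> nat \<Rightarrow> 'k) \<Rightarrow> (nat \<times> nat \<Rightarrow> 'k) set" where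
  "qp_cls I y = {y + z | z. z \<in> I}"

definition qp_quot :: "(nat \<times> nat \<Rightarrow> 'k::field) set \<Rightarrow> (nat \<times> nat \<Rightarrow> 'k) set set" where
  "qp_quot I = qp_cls I ` qp_carrier"

definition qp_quot_submodule :: "'k::field \<Rightarrow> (nat \<times> nat \<Rightarrow> 'k) set \<Rightarrow> (nat \<times> nat \<Rightarrow> 'k) set set \<Rightarrow> bool" where
  "qp_quot_submodule q I S \<longleftrightarrow> S \<subseteq> qp_quot I \<and> qp_cls I 0 \<in> S
     \<and> (\<forall>y\<in>qp_carrier. \<forall>z\<in>qp_carrier. qp_cls I y \<in> S \<longrightarrow> qp_cls I z \<in> S \<longrightarrow> qp_cls I (y + z) \<in> S)
     \<and> (\<forall>r\<in>qp_carrier. \<forall>y\<in>qp_carrier. qp_cls I y \<in> S \<longrightarrow> qp_cls I (qp_mult q r y) \<in> S)"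

definition qp_quot_artinian :: "'k::field \<Rightarrow> (nat \<times> nat \<Rightarrow> 'k) set \<Rightarrow> bool" where
  "qp_quot_artinian q I \<longleftrightarrow> (\<forall>S :: nat \<Rightarrow> (nat \<times> nat \<Rightarrow> 'k) set set.
      (\<forall>n. qp_quot_submodule q I (S n)) \<and> (\<forall>n. S (Suc n) \<subseteq> S n)
      \<longrightarrow> (\<exists>n. \<forall>k\<ge>n. S k = S n))"

definition qp_quot_lmult :: "'k::field \<Rightarrow> (nat \<times> nat \<Rightarrow> 'k) set \<Rightarrow> (nat \<times> nat \<Rightarrow> 'k) \<Rightarrow> (nat \<times> nat \<Rightarrow> 'k) set set" where
  "qp_quot_lmult q I t = {qp_cls I (qp_mult q t y) | y. y \<in> qp_carrier}"

end

theory Submission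
  imports Defs
begin


lemma sum_delta2:
  fixes n m i j :: nat
  shows "(\<Sum>i'\<le>n. \<Sum>j'\<le>m. if i' = i \<and> j' = j then F i' j' else (0::'a::comm_monoid_add)) = (if i \<le> n \<and> j \<le> m then F i j else 0)"
proof -
  have "(\<Sum>j'\<le>m. if i' = i \<and> j' = j then F i' j' else 0) = (if i' = i then (if j \<le> m then F i j else 0) else 0)" for i'
  proof (cases "i' = i")
    case True
    have "(\<Sum>j'\<le>m. if i' = i \<and> j' = j then F i' j' else 0) = (\<Sum>j'\<le>m. if j' = j then F i j else 0)"
      using True by (intro sum.cong) auto
    then show ?thesis using True by simp
  qed simp
  then show ?thesis by (simp add: sum.delta)
qed

lemma mult_mon_left_pt:
  "qp_mult q (qp_mon i j) g (n,m) = (if i \<le> n \<and> j \<le> m then g (n-i, m-j) * inverse q ^ (j*(n-i)) else 0)"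
proof -
  have "qp_mult q (qp_mon i j) g (n,m) = (\<Sum>i'\<le>n. \<Sum>j'\<le>m. if i' = i \<and> j' = j then g (n - i', m - j') * inverse q ^ (j' * (n - i')) else 0)"
    unfolding qp_mult_def qp_mon_def by (simp, intro sum.cong refl) auto
  also have "\<dots> = (if i \<le> n \<and> j \<le> m then g (n-i, m-j) * inverse q ^ (j*(n-i)) else 0)"
    by (rule sum_delta2)
  finally show ?thesis .
qed

lemma mult_mon_left:
  "qp_mult q (qp_mon i j) g = (\<lambda>(n,m). if i \<le> n \<and> j \<le> m then g (n-i, m-j) * inverse q ^ (j*(n-i)) else 0)"
  by (rule ext) (auto simp: mult_mon_left_pt)

lemma mult_mon_right_pt:
  "qp_mult q g (qp_mon k l) (n,m) = (if k \<le> n \<and> l \<le> m then g (n-k, m-l) * inverse q ^ ((m-l)*k) else 0)"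
proof -
  have "qp_mult q g (qp_mon k l) (n,m) = (\<Sum>i\<le>n. \<Sum>j\<le>m. if i = n - k \<and> j = m - l then (if k \<le> n \<and> l \<le> m then g (i, j) * inverse q ^ (j * (n - i)) else 0) else 0)"
    unfolding qp_mult_def qp_mon_def by (simp, intro sum.cong refl) auto
  also have "\<dots> = (if k \<le> n \<and> l \<le> m then g (n-k, m-l) * inverse q ^ ((m-l)*k) else 0)"
    by (subst sum_delta2) (auto simp: mult.commute)
  finally show ?thesis .
qed

lemma mult_mon_right:
  "qp_mult q g (qp_mon k l) = (\<lambda>(n,m). if k \<le> n \<and> l \<le> m then g (n-k, m-l) * inverse q ^ ((m-l)*k) else 0)"
  by (rule ext) (auto simp: mult_mon_right_pt)

lemma carrier_bound:
  assumes "f \<in> qp_carrier"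
  shows "\<exists>N. \<forall>n m. f (n,m) \<noteq> 0 \<longrightarrow> n \<le> N \<and> m \<le> N"
proof -
  have fin: "finite {p. f p \<noteq> 0}" using assms by (simp add: qp_carrier_def)
  have "finite (fst ` {p. f p \<noteq> 0} \<union> snd ` {p. f p \<noteq> 0})" using fin by simp
  then obtain N where "\<forall>x \<in> fst ` {p. f p \<noteq> 0} \<union> snd ` {p. f p \<noteq> 0}. x \<le> N"
    using finite_nat_set_iff_bounded_le by blast
  then have N: "\<forall>x \<in> fst ` {p. f p \<noteq> 0}. x \<le> N" "\<forall>x \<in> snd ` {p. f p \<noteq> 0}. x \<le> N" by blast+
  show ?thesis
  proof (intro exI allI impI)
    fix n m assume "f (n,m) \<noteq> 0"
    then have "n \<in> fst ` {p. f p \<noteq> 0}" "m \<in> snd ` {p. f p \<noteq> 0}" by force+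
    then show "n \<le> N \<and> m \<le> N" using N by blast
  qed
qed

lemma bound_carrier:
  assumes "\<forall>n m. f (n,m) \<noteq> 0 \<longrightarrow> n \<le> N \<and> m \<le> N"
  shows "f \<in> qp_carrier"
proof -
  have "{p. f p \<noteq> 0} \<subseteq> {..N} \<times> {..N}" using assms by auto
  then show ?thesis unfolding qp_carrier_def by (auto intro: finite_subset)
qed

lemma mult_carrier:
  assumes "f \<in> qp_carrier" "g \<in> qp_carrier"
  shows "qp_mult q f g \<in> qp_carrier"
proof -
  obtain N1 where N1: "\<forall>n m. f (n,m) \<noteq> 0 \<longrightarrow> n \<le> N1 \<and> m \<le> N1" using carrier_bound[OF assms(1)] by blast
  obtain N2 where N2: "\<forall>n m. g (n,m) \<noteq> 0 \<longrightarrow> n \<le> N2 \<and> m \<le> N2" using carrier_bound[OF assms(2)] by blast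
  have "qp_mult q f g (n,m) = 0" if "\<not> (n \<le> N1 + N2 \<and> m \<le> N1 + N2)" for n m
  proof -
    have "f (i, j) * g (n - i, m - j) = 0" if "i \<le> n" "j \<le> m" for i j
    proof (rule ccontr)
      assume "f (i, j) * g (n - i, m - j) \<noteq> 0"
      then have "f (i, j) \<noteq> 0" "g (n - i, m - j) \<noteq> 0" by auto
      then have "i \<le> N1" "j \<le> N1" "n - i \<le> N2" "m - j \<le> N2" using N1 N2 by blast+
      with that \<open>\<not> (n \<le> N1 + N2 \<and> m \<le> N1 + N2)\<close> show False by linarith
    qed
    then show ?thesis unfolding qp_mult_def by (simp, intro sum.neutral ballI) auto
  qed
  then show ?thesis by (intro bound_carrier[of _ "N1+N2"]) blast
qed

lemma mult_add_left: "qp_mult q (f + g) h = qp_mult q f h + qp_mult q g h"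
  unfolding qp_mult_def by (rule ext) (auto simp: sum.distrib distrib_right)

lemma mult_add_right: "qp_mult q h (f + g) = qp_mult q h f + qp_mult q h g"
  unfolding qp_mult_def by (rule ext) (auto simp: sum.distrib distrib_right distrib_left)

lemma mult_diff_left: "qp_mult q (f - g) h = qp_mult q f h - qp_mult q g h"
  unfolding qp_mult_def by (rule ext) (auto simp: sum_subtractf left_diff_distrib)

lemma mult_diff_right: "qp_mult q h (f - g) = qp_mult q h f - qp_mult q h g"
  unfolding qp_mult_def by (rule ext) (auto simp: sum_subtractf right_diff_distrib left_diff_distrib)

lemma mult_zero_left: "qp_mult q 0 h = 0"
  unfolding qp_mult_def by (rule ext) auto

lemma mult_zero_right: "qp_mult q h 0 = 0"
  unfolding qp_mult_def by (rule ext) auto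

lemma mult_smul_left: "qp_mult q (\<lambda>p. c * f p) h = (\<lambda>p. c * qp_mult q f h p)"
  unfolding qp_mult_def by (rule ext) (auto simp: sum_distrib_left mult.assoc)

lemma mult_one_right: "qp_mult q f qp_one = f"
  by (rule ext) (auto simp: mult_mon_right_pt)

lemma mult_one_left: "qp_mult q qp_one f = f"
  by (rule ext) (auto simp: mult_mon_left_pt)

lemma mon_carrier: "qp_mon i j \<in> qp_carrier"
  by (rule bound_carrier[of _ "i+j"]) (auto simp: qp_mon_def)

lemma add_carrier: "f \<in> qp_carrier \<Longrightarrow> g \<in> qp_carrier \<Longrightarrow> f + g \<in> qp_carrier"
  unfolding qp_carrier_def
  by (auto intro: finite_subset[of _ "{p. f p \<noteq> 0} \<union> {p. g p \<noteq> 0}"])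

lemma diff_carrier: "f \<in> qp_carrier \<Longrightarrow> g \<in> qp_carrier \<Longrightarrow> f - g \<in> qp_carrier"
  unfolding qp_carrier_def
  by (auto intro: finite_subset[of _ "{p. f p \<noteq> 0} \<union> {p. g p \<noteq> 0}"])

lemma smul_carrier: "f \<in> qp_carrier \<Longrightarrow> (\<lambda>p. c * f p) \<in> qp_carrier"
  unfolding qp_carrier_def by (auto intro: finite_subset[of _ "{p. f p \<noteq> 0}"])

lemma zero_carrier: "0 \<in> qp_carrier"
  unfolding qp_carrier_def by simp

definition lin :: "(nat \<times> nat \<Rightarrow> 'k::field) \<Rightarrow> (nat \<times> nat \<Rightarrow> 'k) \<Rightarrow> 'k" where
  "lin c f = (\<Sum>p\<in>{p. f p \<noteq> 0}. f p * c p)"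

lemma lin_superset:
  assumes "finite S" "{p. f p \<noteq> 0} \<subseteq> S"
  shows "lin c f = (\<Sum>p\<in>S. f p * c p)"
  unfolding lin_def using assms by (intro sum.mono_neutral_left) auto

lemma lin_add:
  assumes "f \<in> qp_carrier" "g \<in> qp_carrier"
  shows "lin c (f + g) = lin c f + lin c g"
proof -
  let ?S = "{p. f p \<noteq> 0} \<union> {p. g p \<noteq> 0}"
  have fin: "finite ?S" using assms by (simp add: qp_carrier_def)
  have "lin c (f + g) = (\<Sum>p\<in>?S. (f + g) p * c p)" by (rule lin_superset[OF fin]) auto
  also have "\<dots> = (\<Sum>p\<in>?S. f p * c p) + (\<Sum>p\<in>?S. g p * c p)" by (simp add: sum.distrib distrib_right)
  also have "\<dots> = lin c f + lin c g"
  proof -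
    have "lin c f = (\<Sum>p\<in>?S. f p * c p)" by (rule lin_superset[OF fin]) auto
    moreover have "lin c g = (\<Sum>p\<in>?S. g p * c p)" by (rule lin_superset[OF fin]) auto
    ultimately show ?thesis by simp
  qed
  finally show ?thesis .
qed

lemma lin_diff:
  assumes "f \<in> qp_carrier" "g \<in> qp_carrier"
  shows "lin c (f - g) = lin c f - lin c g"
proof -
  let ?S = "{p. f p \<noteq> 0} \<union> {p. g p \<noteq> 0}"
  have fin: "finite ?S" using assms by (simp add: qp_carrier_def)
  have "lin c (f - g) = (\<Sum>p\<in>?S. (f - g) p * c p)" by (rule lin_superset[OF fin]) auto
  also have "\<dots> = (\<Sum>p\<in>?S. f p * c p) - (\<Sum>p\<in>?S. g p * c p)" by (simp add: sum_subtractf left_diff_distrib)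
  also have "\<dots> = lin c f - lin c g"
  proof -
    have "lin c f = (\<Sum>p\<in>?S. f p * c p)" by (rule lin_superset[OF fin]) auto
    moreover have "lin c g = (\<Sum>p\<in>?S. g p * c p)" by (rule lin_superset[OF fin]) auto
    ultimately show ?thesis by simp
  qed
  finally show ?thesis .
qed

lemma lin_smul:
  assumes "f \<in> qp_carrier"
  shows "lin c (\<lambda>p. a * f p) = a * lin c f"
proof -
  have fin: "finite {p. f p \<noteq> 0}" using assms by (simp add: qp_carrier_def)
  have "lin c (\<lambda>p. a * f p) = (\<Sum>p\<in>{p. f p \<noteq> 0}. a * f p * c p)" by (rule lin_superset[OF fin]) auto
  also have "\<dots> = a * lin c f" by (simp add: lin_def sum_distrib_left mult.assoc)
  finally show ?thesis .
qed

lemma lin_zero: "lin c 0 = 0"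
  unfolding lin_def by simp

lemma lin_cong: "(\<And>p. f p \<noteq> 0 \<Longrightarrow> c p = c' p) \<Longrightarrow> lin c f = lin c' f"
  unfolding lin_def by (intro sum.cong) auto

lemma lin_coef_add: "lin (\<lambda>p. c1 p + c2 p) f = lin c1 f + lin c2 f"
  unfolding lin_def by (simp add: sum.distrib distrib_left)

lemma lin_coef_single:
  assumes "f \<in> qp_carrier"
  shows "lin (\<lambda>p. if p = p0 then v else 0) f = f p0 * v"
proof -
  have fin: "finite ({p. f p \<noteq> 0} \<union> {p0})" using assms by (simp add: qp_carrier_def)
  have "lin (\<lambda>p. if p = p0 then v else 0) f = (\<Sum>p\<in>{p. f p \<noteq> 0} \<union> {p0}. f p * (if p = p0 then v else 0))"
    by (rule lin_superset[OF fin]) auto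
  also have "\<dots> = f p0 * v" using fin by (simp add: if_distrib cong: if_cong)
  finally show ?thesis .
qed

lemma lin_mon: "lin c (qp_mon i j) = c (i,j)"
proof -
  have "lin c (qp_mon i j) = (\<Sum>p\<in>{(i,j)}. qp_mon i j p * c p)"
    by (rule lin_superset) (auto simp: qp_mon_def)
  then show ?thesis by (simp add: qp_mon_def)
qed

lemma lin_shift:
  assumes g: "g \<in> qp_carrier"
  shows "lin c (\<lambda>(n,m). if i \<le> n \<and> j \<le> m then g (n-i, m-j) * s (n-i, m-j) else 0)
         = lin (\<lambda>(n,m). c (n+i, m+j) * s (n,m)) g"
proof -
  let ?F = "\<lambda>(n,m). if i \<le> n \<and> j \<le> m then g (n-i, m-j) * s (n-i, m-j) else 0"
  define h where "h = (\<lambda>(n::nat, m::nat). (n+i, m+j))"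
  have fin: "finite {p. g p \<noteq> 0}" using g by (simp add: qp_carrier_def)
  have inj: "inj_on h {p. g p \<noteq> 0}" unfolding h_def by (auto simp: inj_on_def)
  have sub: "{p. ?F p \<noteq> 0} \<subseteq> h ` {p. g p \<noteq> 0}"
  proof
    fix p assume "p \<in> {p. ?F p \<noteq> 0}"
    then obtain n m where p: "p = (n,m)" "i \<le> n" "j \<le> m" "g (n-i, m-j) \<noteq> 0"
      by (cases p) (auto split: if_splits)
    then have "p = h (n-i, m-j)" unfolding h_def by auto
    then show "p \<in> h ` {p. g p \<noteq> 0}" using p by auto
  qed
  have "lin c ?F = (\<Sum>p\<in>h ` {p. g p \<noteq> 0}. ?F p * c p)"
    by (rule lin_superset[OF _ sub]) (use fin in simp)
  also have "\<dots> = (\<Sum>p\<in>{p. g p \<noteq> 0}. ?F (h p) * c (h p))"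
    by (subst sum.reindex[OF inj]) simp
  also have "\<dots> = (\<Sum>p\<in>{p. g p \<noteq> 0}. g p * (\<lambda>(n,m). c (n+i, m+j) * s (n,m)) p)"
    by (intro sum.cong refl) (auto simp: h_def)
  also have "\<dots> = lin (\<lambda>(n,m). c (n+i, m+j) * s (n,m)) g" by (simp add: lin_def)
  finally show ?thesis .
qed

lemma lin_mult_mon_left:
  assumes "g \<in> qp_carrier"
  shows "lin c (qp_mult q (qp_mon i j) g) = lin (\<lambda>(n,m). c (n+i, m+j) * inverse q ^ (j*n)) g"
proof -
  have "qp_mult q (qp_mon i j) g = (\<lambda>(n,m). if i \<le> n \<and> j \<le> m then g (n-i, m-j) * (\<lambda>(a,b). inverse q ^ (j*a)) (n-i, m-j) else 0)"
    by (rule ext) (auto simp: mult_mon_left_pt)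
  then show ?thesis using lin_shift[OF assms, of c i j "\<lambda>(a,b). inverse q ^ (j*a)"]
    by (simp add: case_prod_beta)
qed

lemma lin_mult_mon_right:
  assumes "g \<in> qp_carrier"
  shows "lin c (qp_mult q g (qp_mon k l)) = lin (\<lambda>(n,m). c (n+k, m+l) * inverse q ^ (m*k)) g"
proof -
  have "qp_mult q g (qp_mon k l) = (\<lambda>(n,m). if k \<le> n \<and> l \<le> m then g (n-k, m-l) * (\<lambda>(a,b). inverse q ^ (b*k)) (n-k, m-l) else 0)"
    by (rule ext) (auto simp: mult_mon_right_pt)
  then show ?thesis using lin_shift[OF assms, of c k l "\<lambda>(a,b). inverse q ^ (b*k)"]
    by (simp add: case_prod_beta)
qed



lemma lin_vanish: "(\<And>p. f p \<noteq> 0 \<Longrightarrow> c p = 0) \<Longrightarrow> lin c f = 0"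
  unfolding lin_def by (intro sum.neutral) auto

lemma lin_coef_smul: "lin (\<lambda>p. a * c p) f = a * lin c f"
  unfolding lin_def by (simp add: sum_distrib_left mult_ac)

lemma w_eq: "qp_w q = qp_mon 1 1"
proof (rule ext)
  fix p :: "nat \<times> nat"
  obtain n m where p: "p = (n,m)" by (cases p)
  show "qp_w q p = qp_mon 1 1 p"
    unfolding qp_w_def p mult_mon_left_pt by (auto simp: qp_mon_def)
qed

lemma sigma_pow: "(qp_sigma q ^^ m) f = (\<lambda>(i,j). (inverse q ^ i * q ^ j) ^ m * f (i,j))"
proof (induction m)
  case 0
  show ?case by (rule ext) auto
next
  case (Suc m)
  show ?case
  proof (rule ext)
    fix p :: "nat \<times> nat"
    obtain i j where p: "p = (i,j)" by (cases p)
    have "(qp_sigma q ^^ Suc m) f p = qp_sigma q ((qp_sigma q ^^ m) f) p" by simp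
    also have "\<dots> = (inverse q ^ i * q ^ j) ^ Suc m * f (i,j)"
      unfolding Suc.IH by (simp add: qp_sigma_def p mult_ac)
    finally show "(qp_sigma q ^^ Suc m) f p = (\<lambda>(i,j). (inverse q ^ i * q ^ j) ^ Suc m * f (i,j)) p"
      by (simp add: p)
  qed
qed

lemma sigma_x: "(qp_sigma q ^^ m) (qp_a - qp_one) = (\<lambda>p. inverse q ^ m * qp_a p) - qp_one"
  by (rule ext) (auto simp: sigma_pow qp_mon_def split: if_splits)



lemma assoc_mon_right_pt:
  "qp_mult q r (qp_mult q c (qp_mon k l)) (n,m) = qp_mult q (qp_mult q r c) (qp_mon k l) (n,m)"
proof (cases "k \<le> n \<and> l \<le> m")
  case True
  have "qp_mult q r (qp_mult q c (qp_mon k l)) (n,m)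
      = (\<Sum>i\<le>n. \<Sum>j\<le>m. r (i,j) * (if k \<le> n - i \<and> l \<le> m - j then c (n - i - k, m - j - l) * inverse q ^ ((m - j - l) * k) else 0) * inverse q ^ (j * (n - i)))"
    unfolding qp_mult_def[of q r] by (simp add: mult_mon_right_pt)
  also have "\<dots> = (\<Sum>i\<le>n - k. \<Sum>j\<le>m. r (i,j) * (if k \<le> n - i \<and> l \<le> m - j then c (n - i - k, m - j - l) * inverse q ^ ((m - j - l) * k) else 0) * inverse q ^ (j * (n - i)))"
    by (rule sum.mono_neutral_right) (auto intro!: sum.neutral)
  also have "\<dots> = (\<Sum>i\<le>n - k. \<Sum>j\<le>m - l. r (i,j) * (if k \<le> n - i \<and> l \<le> m - j then c (n - i - k, m - j - l) * inverse q ^ ((m - j - l) * k) else 0) * inverse q ^ (j * (n - i)))"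
    by (rule sum.cong[OF refl], rule sum.mono_neutral_right) auto
  also have "\<dots> = (\<Sum>i\<le>n - k. \<Sum>j\<le>m - l. r (i,j) * c (n - k - i, m - l - j) * inverse q ^ (j * (n - k - i)) * inverse q ^ ((m - l) * k))"
  proof (intro sum.cong refl)
    fix i j assume i: "i \<in> {..n-k}" and j: "j \<in> {..m-l}"
    then obtain a b where a: "n = k + i + a" and b: "m = l + j + b" using True
      by (metis add.commute atMost_iff le_add_diff_inverse le_diff_conv2)
    have e: "(m - j - l) * k + j * (n - i) = j * (n - k - i) + (m - l) * k"
      using a b by (simp add: algebra_simps)
    have "inverse q ^ ((m - j - l) * k) * inverse q ^ (j * (n - i)) = inverse q ^ (j * (n - k - i)) * inverse q ^ ((m - l) * k)"
      by (simp only: power_add[symmetric] e)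
    moreover have "n - i - k = n - k - i" "m - j - l = m - l - j" by auto
    moreover have "k \<le> n - i \<and> l \<le> m - j" using a b by auto
    ultimately show "r (i,j) * (if k \<le> n - i \<and> l \<le> m - j then c (n - i - k, m - j - l) * inverse q ^ ((m - j - l) * k) else 0) * inverse q ^ (j * (n - i))
         = r (i,j) * c (n - k - i, m - l - j) * inverse q ^ (j * (n - k - i)) * inverse q ^ ((m - l) * k)"
      by (simp add: mult_ac)
  qed
  also have "\<dots> = qp_mult q (qp_mult q r c) (qp_mon k l) (n,m)"
    using True by (simp add: mult_mon_right_pt qp_mult_def[of q r c] sum_distrib_right)
  finally show ?thesis .
next
  case False
  then show ?thesis
    unfolding qp_mult_def[of q r] by (auto simp: mult_mon_right_pt intro!: sum.neutral)
qed

lemma assoc_mon_right: "qp_mult q r (qp_mult q c (qp_mon k l)) = qp_mult q (qp_mult q r c) (qp_mon k l)"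
  by (rule ext) (auto simp: assoc_mon_right_pt)



lemma principal_ideal:
  fixes q :: "'k::field"
  shows "qp_left_ideal q (qp_lprincipal q (qp_mon k l - qp_one))"
  unfolding qp_left_ideal_def qp_lprincipal_def
proof (intro conjI ballI)
  show "{qp_mult q c (qp_mon k l - qp_one) |c. c \<in> qp_carrier} \<subseteq> qp_carrier"
    using mult_carrier diff_carrier mon_carrier by blast
  show "0 \<in> {qp_mult q c (qp_mon k l - qp_one) |c. c \<in> qp_carrier}"
  proof -
    have "0 = qp_mult q 0 (qp_mon k l - qp_one)" by (simp add: mult_zero_left)
    then show ?thesis using zero_carrier by blast
  qed
next
  fix u v assume "u \<in> {qp_mult q c (qp_mon k l - qp_one) |c. c \<in> qp_carrier}" "v \<in> {qp_mult q c (qp_mon k l - qp_one) |c. c \<in> qp_carrier}"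
  then obtain c1 c2 where "u = qp_mult q c1 (qp_mon k l - qp_one)" "v = qp_mult q c2 (qp_mon k l - qp_one)" "c1 \<in> qp_carrier" "c2 \<in> qp_carrier" by blast
  then show "u + v \<in> {qp_mult q c (qp_mon k l - qp_one) |c. c \<in> qp_carrier}"
  proof -
    have "u + v = qp_mult q (c1 + c2) (qp_mon k l - qp_one)" using \<open>u = _\<close> \<open>v = _\<close> by (simp add: mult_add_left)
    then show ?thesis using add_carrier \<open>c1 \<in> qp_carrier\<close> \<open>c2 \<in> qp_carrier\<close> by blast
  qed
next
  fix r u :: "nat \<times> nat \<Rightarrow> 'k" assume r: "r \<in> qp_carrier" and "u \<in> {qp_mult q c (qp_mon k l - qp_one) |c. c \<in> qp_carrier}"
  then obtain c where u: "u = qp_mult q c (qp_mon k l - qp_one)" "c \<in> qp_carrier" by blast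
  have "qp_mult q r u = qp_mult q (qp_mult q r c) (qp_mon k l - qp_one)"
    unfolding u by (simp add: mult_diff_right mult_one_right assoc_mon_right)
  then show "qp_mult q r u \<in> {qp_mult q c (qp_mon k l - qp_one) |c. c \<in> qp_carrier}"
    using mult_carrier[OF r u(2)] by blast
qed



primrec qbeta :: "'k::field \<Rightarrow> 'k \<Rightarrow> nat \<Rightarrow> 'k" where
  "qbeta q l 0 = 1"
| "qbeta q l (Suc j) = l * q ^ j * qbeta q l j"

definition qalpha :: "'k::field \<Rightarrow> 'k \<Rightarrow> nat \<times> nat \<Rightarrow> 'k" where
  "qalpha q l p = inverse l ^ fst p * qbeta q l (snd p)"

lemma alpha_J:
  assumes q: "q \<noteq> 0" and l: "l \<noteq> 0" and y: "y \<in> qp_carrier"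
  shows "lin (qalpha q l) (qp_mult q y (qp_mon 1 1 - qp_one)) = 0"
proof -
  have "lin (qalpha q l) (qp_mult q y (qp_mon 1 1)) = lin (\<lambda>(n,m). qalpha q l (n+1, m+1) * inverse q ^ (m*1)) y"
    by (rule lin_mult_mon_right[OF y])
  also have "\<dots> = lin (qalpha q l) y"
  proof (rule lin_cong)
    fix p :: "nat \<times> nat"
    obtain n m where p: "p = (n,m)" by (cases p)
    have "inverse l ^ Suc n * (l * q ^ m * qbeta q l m) * inverse q ^ m = inverse l ^ n * qbeta q l m"
      using q l by (simp add: field_simps power_inverse)
    then show "(\<lambda>(n,m). qalpha q l (n+1, m+1) * inverse q ^ (m*1)) p = qalpha q l p"
      by (simp add: p qalpha_def)
  qed
  finally have "lin (qalpha q l) (qp_mult q y (qp_mon 1 1)) = lin (qalpha q l) y" .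
  then show ?thesis
    by (simp add: mult_diff_right mult_one_right lin_diff mult_carrier y mon_carrier)
qed

lemma alpha_a:
  assumes l: "l \<noteq> 0" and y: "y \<in> qp_carrier"
  shows "lin (qalpha q l) (qp_mult q qp_a y) = inverse l * lin (qalpha q l) y"
proof -
  have "lin (qalpha q l) (qp_mult q qp_a y) = lin (\<lambda>(n,m). qalpha q l (n+1, m+0) * inverse q ^ (0*n)) y"
    by (rule lin_mult_mon_left[OF y])
  also have "\<dots> = lin (\<lambda>p. inverse l * qalpha q l p) y"
    by (rule lin_cong) (auto simp: qalpha_def)
  finally show ?thesis by (simp add: lin_coef_smul)
qed

lemma partA2:
  assumes q: "q \<noteq> 0" and c: "c \<in> qp_carrier"
  shows "qp_mult q ((qp_sigma q ^^ m) (qp_a - qp_one)) c - qp_one \<notin> qp_lprincipal q (qp_w q - qp_one)"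
proof
  let ?l = "inverse q ^ m"
  have l: "?l \<noteq> 0" using q by simp
  assume "qp_mult q ((qp_sigma q ^^ m) (qp_a - qp_one)) c - qp_one \<in> qp_lprincipal q (qp_w q - qp_one)"
  then obtain y where y: "y \<in> qp_carrier" and eq: "qp_mult q ((qp_sigma q ^^ m) (qp_a - qp_one)) c - qp_one = qp_mult q y (qp_mon 1 1 - qp_one)"
    unfolding qp_lprincipal_def w_eq by blast
  have "qp_mult q ((qp_sigma q ^^ m) (qp_a - qp_one)) c = (\<lambda>p. ?l * qp_mult q qp_a c p) - c"
    unfolding sigma_x by (simp add: mult_diff_left mult_smul_left mult_one_left)
  note eqs = this
  have mac: "qp_mult q qp_a c \<in> qp_carrier" by (intro mult_carrier mon_carrier c)
  have aa: "lin (qalpha q ?l) (qp_mult q qp_a c) = inverse ?l * lin (qalpha q ?l) c" by (rule alpha_a[OF l c])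
  have "lin (qalpha q ?l) (qp_mult q ((qp_sigma q ^^ m) (qp_a - qp_one)) c) = lin (qalpha q ?l) ((\<lambda>p. ?l * qp_mult q qp_a c p) - c)"
    by (simp only: eqs)
  also have "\<dots> = ?l * lin (qalpha q ?l) (qp_mult q qp_a c) - lin (qalpha q ?l) c"
    by (simp only: lin_diff[OF smul_carrier[OF mac] c] lin_smul[OF mac])
  also have "\<dots> = ?l * (inverse ?l * lin (qalpha q ?l) c) - lin (qalpha q ?l) c"
    by (simp only: aa)
  also have "\<dots> = 0" using l by simp
  finally have A: "lin (qalpha q ?l) (qp_mult q ((qp_sigma q ^^ m) (qp_a - qp_one)) c) = 0" .
  have car: "qp_mult q ((qp_sigma q ^^ m) (qp_a - qp_one)) c \<in> qp_carrier"
    unfolding sigma_x by (simp add: mult_carrier c diff_carrier smul_carrier mon_carrier)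
  have "lin (qalpha q ?l) (qp_mult q ((qp_sigma q ^^ m) (qp_a - qp_one)) c - qp_one) = -1"
    by (simp only: lin_diff[OF car mon_carrier] A lin_mon) (simp add: qalpha_def)
  moreover have "lin (qalpha q ?l) (qp_mult q y (qp_mon 1 1 - qp_one)) = 0"
    by (rule alpha_J[OF q l y])
  ultimately show False using eq by simp
qed

lemma one_notin_J:
  assumes q: "q \<noteq> 0"
  shows "qp_one \<notin> qp_lprincipal q (qp_w q - qp_one)"
proof
  assume "qp_one \<in> qp_lprincipal q (qp_w q - qp_one)"
  then obtain y where y: "y \<in> qp_carrier" and eq: "qp_one = qp_mult q y (qp_mon 1 1 - qp_one)"
    unfolding qp_lprincipal_def w_eq by blast
  have "lin (qalpha q 1) (qp_mult q y (qp_mon 1 1 - qp_one)) = 0"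
    by (rule alpha_J[OF q _ y]) simp
  moreover have "lin (qalpha q 1) qp_one = 1" by (simp add: lin_mon qalpha_def)
  ultimately show False using eq by simp
qed



fun gam :: "'k::field \<Rightarrow> nat \<Rightarrow> nat \<Rightarrow> 'k" where
  "gam q (Suc n) (Suc m) = gam q n m * q ^ m"
| "gam q 0 m = 1"
| "gam q (Suc n) 0 = 1"

lemma gam_nz: "q \<noteq> 0 \<Longrightarrow> gam q n m \<noteq> 0"
  by (induction q n m rule: gam.induct) auto

lemma gam_base: "n = 0 \<or> m = 0 \<Longrightarrow> gam q n m = 1"
  by (cases n; cases m) auto

definition dcoef :: "'k::field \<Rightarrow> nat \<times> nat \<Rightarrow> nat \<times> nat \<Rightarrow> 'k" where
  "dcoef q e p = (if fst p + snd e = snd p + fst e then gam q (fst p) (snd p) else 0)"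

definition psi :: "'k::field \<Rightarrow> nat \<times> nat \<Rightarrow> (nat \<times> nat \<Rightarrow> 'k) \<Rightarrow> 'k" where
  "psi q e f = lin (dcoef q e) f"

definition vecJ :: "'k::field \<Rightarrow> (nat \<times> nat \<Rightarrow> 'k) \<Rightarrow> nat \<times> nat \<Rightarrow> 'k" where
  "vecJ q f = (\<lambda>e. if fst e = 0 \<or> snd e = 0 then psi q e f else 0)"

definition theta :: "'k::field \<Rightarrow> nat \<times> nat \<Rightarrow> 'k" where
  "theta q e = inverse q ^ fst e * q ^ snd e"

lemma psi_J:
  assumes q: "q \<noteq> 0" and y: "y \<in> qp_carrier"
  shows "psi q e (qp_mult q y (qp_mon 1 1 - qp_one)) = 0"
proof -
  have "lin (dcoef q e) (qp_mult q y (qp_mon 1 1)) = lin (\<lambda>(n,m). dcoef q e (n+1, m+1) * inverse q ^ (m*1)) y"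
    by (rule lin_mult_mon_right[OF y])
  also have "\<dots> = lin (dcoef q e) y"
  proof (rule lin_cong)
    fix p :: "nat \<times> nat"
    obtain n m where p: "p = (n,m)" by (cases p)
    have "gam q n m * q ^ m * inverse q ^ m = gam q n m"
      using q by (simp add: power_inverse)
    then show "(\<lambda>(n,m). dcoef q e (n+1, m+1) * inverse q ^ (m*1)) p = dcoef q e p"
      by (auto simp: p dcoef_def)
  qed
  finally have "lin (dcoef q e) (qp_mult q y (qp_mon 1 1)) = lin (dcoef q e) y" .
  then show ?thesis unfolding psi_def
    by (simp add: mult_diff_right mult_one_right lin_diff mult_carrier y mon_carrier)
qed

lemma psi_w:
  assumes q: "q \<noteq> 0" and g: "g \<in> qp_carrier" and e: "fst e = 0 \<or> snd e = 0"
  shows "psi q e (qp_mult q (qp_mon 1 1) g) = theta q e * psi q e g"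
proof -
  have "lin (dcoef q e) (qp_mult q (qp_mon 1 1) g) = lin (\<lambda>(n,m). dcoef q e (n+1, m+1) * inverse q ^ (1*n)) g"
    by (rule lin_mult_mon_left[OF g])
  also have "\<dots> = lin (\<lambda>p. theta q e * dcoef q e p) g"
  proof (rule lin_cong)
    fix p :: "nat \<times> nat"
    obtain n m where p: "p = (n,m)" by (cases p)
    show "(\<lambda>(n,m). dcoef q e (n+1, m+1) * inverse q ^ (1*n)) p = theta q e * dcoef q e p"
    proof (cases "n + snd e = m + fst e")
      case True
      have "q ^ m * inverse q ^ n = theta q e"
      proof (cases "fst e = 0")
        case True
        then have "m = n + snd e" using \<open>n + snd e = m + fst e\<close> by simp
        then show ?thesis using q True by (simp add: theta_def power_add power_inverse)
      next
        case False
        then have "snd e = 0" using e by simp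
        then have "n = m + fst e" using \<open>n + snd e = m + fst e\<close> by simp
        then show ?thesis using q \<open>snd e = 0\<close> by (simp add: theta_def power_add power_inverse field_simps)
      qed
      then show ?thesis using True by (simp add: p dcoef_def mult_ac)
    next
      case False
      then show ?thesis by (simp add: p dcoef_def)
    qed
  qed
  finally show ?thesis unfolding psi_def by (simp add: lin_coef_smul)
qed

lemma psi_mon: "psi q e (qp_mon i j) = dcoef q e (i,j)"
  by (simp add: psi_def lin_mon)

lemma psi_shift_base:
  "psi q (a, b) f = psi q (a - min a b, b - min a b) f"
  unfolding psi_def dcoef_def by (rule lin_cong) auto



lemma psi_complete:
  assumes q: "q \<noteq> 0" and f: "f \<in> qp_carrier"
    and z: "\<And>e. fst e = 0 \<or> snd e = 0 \<Longrightarrow> psi q e f = 0"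
  shows "f \<in> qp_lprincipal q (qp_w q - qp_one)"
proof -
  obtain N where N: "\<forall>n m. f (n,m) \<noteq> 0 \<longrightarrow> n \<le> N \<and> m \<le> N" using carrier_bound[OF f] by blast
  have zall: "psi q e f = 0" for e
  proof -
    obtain a b where e: "e = (a,b)" by (cases e)
    have "psi q (a - min a b, b - min a b) f = 0" by (rule z) auto
    then show ?thesis using psi_shift_base e by metis
  qed
  define D where "D = (\<lambda>(n,m). lin (\<lambda>p. if fst p + m = snd p + n \<and> fst p \<le> n then gam q (fst p) (snd p) else 0) f)"
  have Dsuc: "D (Suc n, Suc m) = D (n,m) + f (Suc n, Suc m) * gam q (Suc n) (Suc m)" for n m
  proof -
    have "(\<lambda>p. if fst p + Suc m = snd p + Suc n \<and> fst p \<le> Suc n then gam q (fst p) (snd p) else 0)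
        = (\<lambda>p. (if fst p + m = snd p + n \<and> fst p \<le> n then gam q (fst p) (snd p) else 0)
             + (if p = (Suc n, Suc m) then gam q (Suc n) (Suc m) else 0))"
      by (rule ext) auto
    then show ?thesis unfolding D_def by (simp add: lin_coef_add lin_coef_single f)
  qed
  have Dbase: "D (n,m) = f (n,m)" if "n = 0 \<or> m = 0" for n m
  proof -
    have "(\<lambda>p. if fst p + m = snd p + n \<and> fst p \<le> n then gam q (fst p) (snd p) else 0)
        = (\<lambda>p. if p = (n,m) then 1 else 0)"
      using that by (auto intro!: ext simp: gam_base)
    then show ?thesis unfolding D_def by (simp add: lin_coef_single f)
  qed
  have Dbig: "D (n,m) = 0" if "\<not> (n \<le> N \<and> m \<le> N)" for n m
  proof -
    have "D (n,m) = psi q (n,m) f" unfolding D_def psi_def dcoef_def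
    proof (simp, rule lin_cong)
      fix p :: "nat \<times> nat" assume "f p \<noteq> 0"
      then have "fst p \<le> N" "snd p \<le> N" using N by (cases p; auto)+
      then show "(if fst p + m = snd p + n \<and> fst p \<le> n then gam q (fst p) (snd p) else 0) =
                 (if fst p + m = snd p + n then gam q (fst p) (snd p) else 0)"
        using that by auto
    qed
    then show ?thesis using zall by simp
  qed
  define c where "c = (\<lambda>(n,m). - D (n,m) / gam q n m)"
  have c: "c \<in> qp_carrier"
  proof (rule bound_carrier[of _ N], intro allI impI)
    fix n m assume "c (n,m) \<noteq> 0"
    then have "D (n,m) \<noteq> 0" by (simp add: c_def)
    then show "n \<le> N \<and> m \<le> N" using Dbig by blast
  qed
  have "qp_mult q c (qp_mon 1 1 - qp_one) = f"
  proof (rule ext, clarify)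
    fix n m
    show "qp_mult q c (qp_mon 1 1 - qp_one) (n,m) = f (n,m)"
    proof (cases "n = 0 \<or> m = 0")
      case True
      then show ?thesis using Dbase[OF True] q
        by (auto simp: mult_diff_right mult_one_right mult_mon_right_pt c_def gam_base)
    next
      case False
      then obtain n' m' where nm: "n = Suc n'" "m = Suc m'" by (metis not0_implies_Suc)
      have g1: "gam q n' m' \<noteq> 0" using gam_nz[OF q] by blast
      have "qp_mult q c (qp_mon 1 1 - qp_one) (n,m) = c (n', m') * inverse q ^ m' - c (n,m)"
        by (simp add: mult_diff_right mult_one_right mult_mon_right_pt nm)
      also have "\<dots> = - D (n',m') / (gam q n' m' * q ^ m') + (D (n',m') + f (n,m) * (gam q n' m' * q ^ m')) / (gam q n' m' * q ^ m')"
        by (simp add: c_def nm Dsuc power_inverse divide_inverse mult_ac)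
      also have "\<dots> = f (n,m)" using g1 q by (simp add: field_simps)
      finally show ?thesis .
    qed
  qed
  then show ?thesis unfolding qp_lprincipal_def w_eq using c by blast
qed



lemma eigen_isolate:
  fixes V :: "('x \<Rightarrow> 'k::field) set"
  assumes add: "\<And>u v. u \<in> V \<Longrightarrow> v \<in> V \<Longrightarrow> (\<lambda>x. u x + v x) \<in> V"
    and sc: "\<And>c v. v \<in> V \<Longrightarrow> (\<lambda>x. c * v x) \<in> V"
    and T: "\<And>v. v \<in> V \<Longrightarrow> (\<lambda>x. \<theta> x * v x) \<in> V"
    and fin: "\<And>v. v \<in> V \<Longrightarrow> finite {x. v x \<noteq> 0}"
    and inj: "inj_on \<theta> B"
    and sub: "\<And>v. v \<in> V \<Longrightarrow> {x. v x \<noteq> 0} \<subseteq> B"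
  shows "v \<in> V \<Longrightarrow> v x0 \<noteq> 0 \<Longrightarrow> (\<lambda>x. if x = x0 then 1 else 0) \<in> V"
proof (induction "card {x. v x \<noteq> 0}" arbitrary: v rule: less_induct)
  case less
  show ?case
  proof (cases "{x. v x \<noteq> 0} = {x0}")
    case True
    have "(\<lambda>x. inverse (v x0) * v x) = (\<lambda>x. if x = x0 then 1 else 0)"
    proof (rule ext)
      fix x show "inverse (v x0) * v x = (if x = x0 then 1 else 0)"
        using True less.prems(2) by (cases "x = x0") auto
    qed
    then show ?thesis using sc[OF less.prems(1)] by metis
  next
    case False
    then obtain x1 where x1: "v x1 \<noteq> 0" "x1 \<noteq> x0" using less.prems(2) by blast
    define u where "u = (\<lambda>x. (\<lambda>x. \<theta> x * v x) x + (\<lambda>x. (- \<theta> x1) * v x) x)"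
    have uV: "u \<in> V" unfolding u_def by (intro add T sc less.prems(1))
    have ux: "u x = (\<theta> x - \<theta> x1) * v x" for x by (simp add: u_def algebra_simps)
    have B: "x0 \<in> B" "x1 \<in> B" using sub[OF less.prems(1)] x1 less.prems(2) by auto
    have supp: "{x. u x \<noteq> 0} = {x. v x \<noteq> 0} - {x1}"
    proof (rule set_eqI)
      fix x
      show "x \<in> {x. u x \<noteq> 0} \<longleftrightarrow> x \<in> {x. v x \<noteq> 0} - {x1}"
      proof (cases "v x = 0")
        case True then show ?thesis by (simp add: ux)
      next
        case False
        then have xB: "x \<in> B" using sub[OF less.prems(1)] by auto
        have "\<theta> x = \<theta> x1 \<longleftrightarrow> x = x1" using inj_onD[OF inj _ xB B(2)] by auto
        then show ?thesis using False by (auto simp: ux)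
      qed
    qed
    have "card {x. u x \<noteq> 0} < card {x. v x \<noteq> 0}"
      unfolding supp by (rule card_Diff1_less[OF fin[OF less.prems(1)]]) (simp add: x1)
    moreover have "u x0 \<noteq> 0"
    proof -
      have "\<theta> x0 \<noteq> \<theta> x1" using B inj x1(2) by (auto dest: inj_onD)
      then show ?thesis using less.prems(2) by (simp add: ux)
    qed
    ultimately show ?thesis using less.hyps uV by blast
  qed
qed

lemma pow_inj:
  fixes q :: "'k::field"
  assumes q: "q \<noteq> 0" and nr: "not_root_of_unity q" and eq: "q ^ a = q ^ b"
  shows "a = b"
proof (rule ccontr)
  assume "a \<noteq> b"
  then consider "a < b" | "b < a" by linarith
  then show False
  proof cases
    case 1
    then have "q ^ b = q ^ a * q ^ (b - a)" by (simp add: power_add[symmetric])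
    then have "q ^ (b - a) = 1" using eq q by simp
    then show False using nr 1 unfolding not_root_of_unity_def by auto
  next
    case 2
    then have "q ^ a = q ^ b * q ^ (a - b)" by (simp add: power_add[symmetric])
    then have "q ^ (a - b) = 1" using eq q by simp
    then show False using nr 2 unfolding not_root_of_unity_def by auto
  qed
qed

lemma theta_inj:
  assumes q: "q \<noteq> 0" and nr: "not_root_of_unity q"
  shows "inj_on (theta q) {e. fst e = 0 \<or> snd e = 0}"
proof (rule inj_onI)
  fix e e' :: "nat \<times> nat" assume e: "e \<in> {e. fst e = 0 \<or> snd e = 0}" and e': "e' \<in> {e. fst e = 0 \<or> snd e = 0}"
    and eq: "theta q e = theta q e'"
  obtain a b a' b' :: nat where ab: "e = (a,b)" "e' = (a',b')" by (cases e; cases e')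
  have h: "q ^ (b + a') = q ^ (b' + a)"
  proof -
    have "inverse q ^ a * q ^ b = inverse q ^ a' * q ^ b'" using eq ab by (simp add: theta_def)
    then have "inverse q ^ a * q ^ b * (q ^ a * q ^ a') = inverse q ^ a' * q ^ b' * (q ^ a * q ^ a')" by simp
    then show ?thesis using q by (simp add: power_add power_inverse field_simps)
  qed
  then have "b + a' = b' + a" using pow_inj[OF q nr] by blast
  then show "e = e'" using e e' ab by auto
qed



lemma vecJ_fin:
  assumes g: "g \<in> qp_carrier"
  shows "finite {e. vecJ q g e \<noteq> 0}"
proof -
  obtain N where N: "\<forall>n m. g (n,m) \<noteq> 0 \<longrightarrow> n \<le> N \<and> m \<le> N" using carrier_bound[OF g] by blast
  have "{e. vecJ q g e \<noteq> 0} \<subseteq> {..N} \<times> {..N}"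
  proof
    fix e assume "e \<in> {e. vecJ q g e \<noteq> 0}"
    then have eb: "fst e = 0 \<or> snd e = 0" and nz: "psi q e g \<noteq> 0" by (auto simp: vecJ_def split: if_splits)
    have "\<exists>p. g p \<noteq> 0 \<and> dcoef q e p \<noteq> 0"
    proof (rule ccontr)
      assume "\<not> ?thesis"
      then have "psi q e g = 0" unfolding psi_def by (intro lin_vanish) blast
      with nz show False by simp
    qed
    then obtain p where p: "g p \<noteq> 0" "fst p + snd e = snd p + fst e" by (auto simp: dcoef_def split: if_splits)
    have "fst p \<le> N" "snd p \<le> N" using N p(1) by (cases p; auto)+
    then show "e \<in> {..N} \<times> {..N}" using p(2) eb by (cases e) auto
  qed
  then show ?thesis by (rule finite_subset) simp
qed

lemma left_ideal_smul:
  assumes L: "qp_left_ideal q L" and g: "g \<in> L"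
  shows "(\<lambda>p. c * g p) \<in> L"
proof -
  have "qp_mult q (\<lambda>p. c * qp_one p) g = (\<lambda>p. c * g p)"
    by (simp add: mult_smul_left mult_one_left)
  moreover have "(\<lambda>p. c * qp_one p) \<in> qp_carrier" by (intro smul_carrier mon_carrier)
  ultimately show ?thesis using L g unfolding qp_left_ideal_def by metis
qed

lemma left_ideal_diff:
  assumes L: "qp_left_ideal q L" and g: "g \<in> L" and h: "h \<in> L"
  shows "g - h \<in> L"
proof -
  have "(\<lambda>p. (-1) * h p) \<in> L" by (rule left_ideal_smul[OF L h])
  then have "g + (\<lambda>p. (-1) * h p) \<in> L" using L g unfolding qp_left_ideal_def by blast
  moreover have "g + (\<lambda>p. (-1) * h p) = g - h" by (rule ext) simp
  ultimately show ?thesis by simp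
qed



lemma maximal_J:
  fixes q :: "'k::field"
  assumes q: "q \<noteq> 0" and nr: "not_root_of_unity q"
  shows "qp_maximal_left_ideal q (qp_lprincipal q (qp_w q - qp_one))"
proof -
  let ?J = "qp_lprincipal q (qp_w q - qp_one)"
  have Jid: "qp_left_ideal q ?J" unfolding w_eq by (rule principal_ideal)
  have Jne: "?J \<noteq> qp_carrier" using one_notin_J[OF q] mon_carrier by blast
  have "L = ?J \<or> L = qp_carrier" if L: "qp_left_ideal q L" and JL: "?J \<subseteq> L" for L
  proof (cases "L = ?J")
    case False
    have Lc: "L \<subseteq> qp_carrier" using L unfolding qp_left_ideal_def by blast
    have Ladd: "\<And>u v. u \<in> L \<Longrightarrow> v \<in> L \<Longrightarrow> u + v \<in> L" using L unfolding qp_left_ideal_def by blast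
    have Lmul: "\<And>r u. r \<in> qp_carrier \<Longrightarrow> u \<in> L \<Longrightarrow> qp_mult q r u \<in> L" using L unfolding qp_left_ideal_def by blast
    have transfer: "u \<in> L" if g: "g \<in> L" and u: "u \<in> qp_carrier"
        and ps: "\<And>e. fst e = 0 \<or> snd e = 0 \<Longrightarrow> psi q e u = psi q e g" for u g
    proof -
      have gc: "g \<in> qp_carrier" using g Lc by blast
      have "u - g \<in> ?J"
        by (rule psi_complete[OF q diff_carrier[OF u gc]]) (simp add: psi_def lin_diff u gc ps[unfolded psi_def])
      then have "u - g \<in> L" using JL by blast
      then have "(u - g) + g \<in> L" using Ladd g by blast
      then show ?thesis by simp
    qed
    obtain f where fL: "f \<in> L" and fJ: "f \<notin> ?J" using False JL by blast
    have fc: "f \<in> qp_carrier" using fL Lc by blast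
    obtain e0 where e0: "fst e0 = 0 \<or> snd e0 = 0" "psi q e0 f \<noteq> 0"
      using psi_complete[OF q fc] fJ by blast
    define V where "V = {vecJ q g | g. g \<in> L}"
    have Vmem: "\<And>g. g \<in> L \<Longrightarrow> vecJ q g \<in> V" unfolding V_def by blast
    have delta: "(\<lambda>x. if x = e0 then 1 else 0) \<in> V"
    proof (rule eigen_isolate[where \<theta> = "theta q" and B = "{e. fst e = 0 \<or> snd e = 0}"])
      show "\<And>u v. u \<in> V \<Longrightarrow> v \<in> V \<Longrightarrow> (\<lambda>x. u x + v x) \<in> V"
      proof -
        fix u v assume "u \<in> V" "v \<in> V"
        then obtain g h where gh: "u = vecJ q g" "v = vecJ q h" "g \<in> L" "h \<in> L" unfolding V_def by blast
        have "vecJ q (g + h) = (\<lambda>x. u x + v x)" using gh Lc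
          by (auto intro!: ext simp: vecJ_def psi_def lin_add subset_iff)
        then show "(\<lambda>x. u x + v x) \<in> V" using Vmem[OF Ladd[OF gh(3,4)]] by simp
      qed
      show "\<And>c v. v \<in> V \<Longrightarrow> (\<lambda>x. c * v x) \<in> V"
      proof -
        fix c v assume "v \<in> V"
        then obtain g where g: "v = vecJ q g" "g \<in> L" unfolding V_def by blast
        have "vecJ q (\<lambda>p. c * g p) = (\<lambda>x. c * v x)" using g Lc
          by (auto intro!: ext simp: vecJ_def psi_def lin_smul subset_iff)
        then show "(\<lambda>x. c * v x) \<in> V" using Vmem[OF left_ideal_smul[OF L g(2), of c]] by simp
      qed
      show "\<And>v. v \<in> V \<Longrightarrow> (\<lambda>x. theta q x * v x) \<in> V"
      proof -
        fix v assume "v \<in> V"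
        then obtain g where g: "v = vecJ q g" "g \<in> L" unfolding V_def by blast
        have gc: "g \<in> qp_carrier" using g Lc by blast
        have eq: "vecJ q (qp_mult q (qp_mon 1 1) g) = (\<lambda>x. theta q x * v x)"
        proof (rule ext)
          fix e :: "nat \<times> nat"
          show "vecJ q (qp_mult q (qp_mon 1 1) g) e = theta q e * v e"
          proof (cases "fst e = 0 \<or> snd e = 0")
            case True
            show ?thesis unfolding vecJ_def g(1) using True psi_w[OF q gc True] by simp
          qed (simp add: vecJ_def g(1))
        qed
        show "(\<lambda>x. theta q x * v x) \<in> V" using Vmem[OF Lmul[OF mon_carrier[of 1 1] g(2)]] unfolding eq .
      qed
      show "\<And>v. v \<in> V \<Longrightarrow> finite {x. v x \<noteq> 0}"
      proof -
        fix v assume "v \<in> V"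
        then obtain g where g: "v = vecJ q g" "g \<in> L" unfolding V_def by blast
        then have "g \<in> qp_carrier" using Lc by blast
        then show "finite {x. v x \<noteq> 0}" using vecJ_fin g(1) by blast
      qed
      show "inj_on (theta q) {e. fst e = 0 \<or> snd e = 0}" by (rule theta_inj[OF q nr])
      show "\<And>v. v \<in> V \<Longrightarrow> {x. v x \<noteq> 0} \<subseteq> {e. fst e = 0 \<or> snd e = 0}"
      proof -
        fix v assume "v \<in> V"
        then obtain g where g: "v = vecJ q g" unfolding V_def by blast
        show "{x. v x \<noteq> 0} \<subseteq> {e. fst e = 0 \<or> snd e = 0}"
          unfolding g(1) vecJ_def by auto
      qed
      show "vecJ q f \<in> V" by (rule Vmem[OF fL])
      show "vecJ q f e0 \<noteq> 0" using e0 by (simp add: vecJ_def)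
    qed
    then have "\<exists>g. (\<lambda>x. if x = e0 then 1 else 0) = vecJ q g \<and> g \<in> L" unfolding V_def mem_Collect_eq .
    then obtain g where g: "g \<in> L" "vecJ q g = (\<lambda>x. if x = e0 then 1 else 0)" by (elim exE conjE) simp
    obtain a b where ab: "e0 = (a,b)" by (cases e0)
    have monL: "qp_mon a b \<in> L"
    proof (rule transfer[OF g(1) mon_carrier])
      fix e :: "nat \<times> nat" assume e: "fst e = 0 \<or> snd e = 0"
      have "psi q e g = (if e = e0 then 1 else 0)" using fun_cong[OF g(2), of e] e by (simp add: vecJ_def)
      moreover have "dcoef q e (a,b) = (if e = e0 then 1 else 0)"
        using e e0(1) ab by (cases e) (auto simp: dcoef_def gam_base)
      ultimately show "psi q e (qp_mon a b) = psi q e g" by (simp add: psi_mon)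
    qed
    let ?k = "a + b"
    have prod: "qp_mult q (qp_mon b a) (qp_mon a b) = (\<lambda>p. inverse q ^ (a*a) * qp_mon ?k ?k p)"
    proof (rule ext)
      fix p :: "nat \<times> nat"
      obtain n k where p: "p = (n,k)" by (cases p)
      show "qp_mult q (qp_mon b a) (qp_mon a b) p = inverse q ^ (a*a) * qp_mon ?k ?k p"
        unfolding p mult_mon_left_pt using e0(1) ab by (auto simp: qp_mon_def)
    qed
    define s where "s = inverse q ^ (a*a) * gam q ?k ?k"
    have s: "s \<noteq> 0" unfolding s_def using q gam_nz[OF q, of ?k ?k] by simp
    have g2: "(\<lambda>p. inverse s * (inverse q ^ (a*a) * qp_mon ?k ?k p)) \<in> L"
      using left_ideal_smul[OF L Lmul[OF mon_carrier[of b a] monL], of "inverse s"] unfolding prod .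
    have oneL: "qp_one \<in> L"
    proof (rule transfer[OF g2 mon_carrier])
      fix e :: "nat \<times> nat" assume e: "fst e = 0 \<or> snd e = 0"
      have c1: "qp_mon ?k ?k \<in> qp_carrier" by (rule mon_carrier)
      have "psi q e (\<lambda>p. inverse s * (inverse q ^ (a*a) * qp_mon ?k ?k p)) = inverse s * (inverse q ^ (a*a) * dcoef q e (?k, ?k))"
        unfolding psi_def by (simp add: lin_smul smul_carrier c1 lin_mon)
      also have "\<dots> = (if e = (0,0) then 1 else 0)"
        using e s by (cases e) (auto simp: dcoef_def s_def field_simps)
      also have "\<dots> = psi q e qp_one"
        using e by (cases e) (auto simp: psi_mon dcoef_def)
      finally show "psi q e qp_one = psi q e (\<lambda>p. inverse s * (inverse q ^ (a*a) * qp_mon ?k ?k p))" by simp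
    qed
    have "qp_carrier \<subseteq> L"
    proof
      fix r :: "nat \<times> nat \<Rightarrow> 'k" assume "r \<in> qp_carrier"
      then have "qp_mult q r qp_one \<in> L" using Lmul oneL by blast
      then show "r \<in> L" by (simp add: mult_one_right)
    qed
    then have "L = qp_carrier" using Lc by (intro subset_antisym)
    then show ?thesis by (rule disjI2)
  qed (rule disjI1)
  then show ?thesis unfolding qp_maximal_left_ideal_def using Jid Jne by blast
qed



definition chi :: "'k::field \<Rightarrow> nat \<Rightarrow> (nat \<times> nat \<Rightarrow> 'k) \<Rightarrow> 'k" where
  "chi q j f = lin (\<lambda>p. if snd p = j then q ^ (fst p * j) else 0) f"

lemma chi_I:
  assumes q: "q \<noteq> 0" and y: "y \<in> qp_carrier"
  shows "chi q j (qp_mult q y (qp_mon 1 0 - qp_one)) = 0"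
proof -
  let ?c = "\<lambda>p. if snd p = j then q ^ (fst p * j) else 0"
  have "lin ?c (qp_mult q y (qp_mon 1 0)) = lin (\<lambda>(n,m). ?c (n+1, m+0) * inverse q ^ (m*1)) y"
    by (rule lin_mult_mon_right[OF y])
  also have "\<dots> = lin ?c y"
  proof (rule lin_cong)
    fix p :: "nat \<times> nat"
    obtain n m where p: "p = (n,m)" by (cases p)
    have "q ^ (Suc n * m) * inverse q ^ m = q ^ (n * m)"
      using q by (simp add: power_add power_inverse)
    then show "(\<lambda>(n,m). ?c (n+1, m+0) * inverse q ^ (m*1)) p = ?c p"
      by (auto simp: p)
  qed
  finally have "lin ?c (qp_mult q y (qp_mon 1 0)) = lin ?c y" .
  then show ?thesis unfolding chi_def
    by (simp add: mult_diff_right mult_one_right lin_diff mult_carrier y mon_carrier)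
qed

lemma chi_mon_left:
  assumes q: "q \<noteq> 0" and g: "g \<in> qp_carrier"
  shows "chi q j (qp_mult q (qp_mon i k) g) = (if k \<le> j then q ^ (i * j) * chi q (j - k) g else 0)"
proof -
  let ?c = "\<lambda>j p. if snd p = j then q ^ (fst p * j) else 0"
  have "lin (?c j) (qp_mult q (qp_mon i k) g) = lin (\<lambda>(n,m). ?c j (n+i, m+k) * inverse q ^ (k*n)) g"
    by (rule lin_mult_mon_left[OF g])
  also have "\<dots> = (if k \<le> j then q ^ (i * j) * lin (?c (j - k)) g else 0)"
  proof (cases "k \<le> j")
    case True
    then obtain d where d: "j = k + d" by (metis le_add_diff_inverse)
    have "lin (\<lambda>(n,m). ?c j (n+i, m+k) * inverse q ^ (k*n)) g = lin (\<lambda>p. q ^ (i * j) * ?c (j - k) p) g"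
    proof (rule lin_cong)
      fix p :: "nat \<times> nat"
      obtain n m where p: "p = (n,m)" by (cases p)
      have "q ^ ((n + i) * (k + d)) = q ^ (i * (k + d)) * q ^ (n * d) * q ^ (k * n)"
        by (simp add: power_add[symmetric] algebra_simps)
      then have "q ^ ((n + i) * (k + d)) * inverse q ^ (k * n) = q ^ (i * (k + d)) * q ^ (n * d)"
        using q by (simp add: power_inverse)
      then show "(\<lambda>(n,m). ?c j (n+i, m+k) * inverse q ^ (k*n)) p = q ^ (i * j) * ?c (j - k) p"
        by (auto simp: p d)
    qed
    then show ?thesis using True by (simp add: lin_coef_smul)
  next
    case False
    then show ?thesis by (auto intro!: lin_vanish)
  qed
  finally show ?thesis unfolding chi_def .
qed

lemma chi_complete:
  assumes q: "q \<noteq> 0" and f: "f \<in> qp_carrier" and z: "\<And>j. chi q j f = 0"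
  shows "f \<in> qp_lprincipal q (qp_mon 1 0 - qp_one)"
proof -
  obtain N where N: "\<forall>n m. f (n,m) \<noteq> 0 \<longrightarrow> n \<le> N \<and> m \<le> N" using carrier_bound[OF f] by blast
  define R where "R = (\<lambda>(n,m). lin (\<lambda>p. if snd p = m \<and> fst p \<le> n then q ^ (fst p * m) else 0) f)"
  have Rsuc: "R (Suc n, m) = R (n,m) + f (Suc n, m) * q ^ (Suc n * m)" for n m
  proof -
    have "(\<lambda>p. if snd p = m \<and> fst p \<le> Suc n then q ^ (fst p * m) else 0)
        = (\<lambda>p. (if snd p = m \<and> fst p \<le> n then q ^ (fst p * m) else 0)
             + (if p = (Suc n, m) then q ^ (Suc n * m) else 0))"
      by (rule ext) auto
    then show ?thesis unfolding R_def by (simp add: lin_coef_add lin_coef_single f)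
  qed
  have R0: "R (0,m) = f (0,m)" for m
  proof -
    have "(\<lambda>p. if snd p = m \<and> fst p \<le> 0 then q ^ (fst p * m) else 0) = (\<lambda>p. if p = (0,m) then 1 else 0)"
      by (auto intro!: ext)
    then show ?thesis unfolding R_def by (simp add: lin_coef_single f)
  qed
  have Rbig: "R (n,m) = 0" if "\<not> (n \<le> N \<and> m \<le> N)" for n m
  proof (cases "n \<le> N")
    case True
    then have "m > N" using that by simp
    show ?thesis unfolding R_def
    proof (simp, rule lin_vanish)
      fix p :: "nat \<times> nat" assume "f p \<noteq> 0"
      then have "snd p \<le> N" using N by (cases p) auto
      then show "(if snd p = m \<and> fst p \<le> n then q ^ (fst p * m) else 0) = 0" using \<open>m > N\<close> by auto
    qed
  next
    case False
    have "R (n,m) = chi q m f" unfolding R_def chi_def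
    proof (simp, rule lin_cong)
      fix p :: "nat \<times> nat" assume "f p \<noteq> 0"
      then have "fst p \<le> N" using N by (cases p) auto
      then show "(if snd p = m \<and> fst p \<le> n then q ^ (fst p * m) else 0) = (if snd p = m then q ^ (fst p * m) else 0)"
        using False by auto
    qed
    then show ?thesis using z by simp
  qed
  define c where "c = (\<lambda>(n,m). - R (n,m) / q ^ (n * m))"
  have c: "c \<in> qp_carrier"
  proof (rule bound_carrier[of _ N], intro allI impI)
    fix n m assume "c (n,m) \<noteq> 0"
    then have "R (n,m) \<noteq> 0" by (simp add: c_def)
    then show "n \<le> N \<and> m \<le> N" using Rbig by blast
  qed
  have "qp_mult q c (qp_mon 1 0 - qp_one) = f"
  proof (rule ext, clarify)
    fix n m
    show "qp_mult q c (qp_mon 1 0 - qp_one) (n,m) = f (n,m)"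
    proof (cases n)
      case 0
      then show ?thesis using R0[of m]
        by (auto simp: mult_diff_right mult_one_right mult_mon_right_pt c_def)
    next
      case (Suc n')
      have "qp_mult q c (qp_mon 1 0 - qp_one) (n,m) = c (n', m) * inverse q ^ m - c (n,m)"
        by (simp add: mult_diff_right mult_one_right mult_mon_right_pt Suc)
      also have "\<dots> = - R (n',m) / (q ^ (n' * m) * q ^ m) + (R (n',m) + f (n,m) * (q ^ (n' * m) * q ^ m)) / (q ^ (n' * m) * q ^ m)"
        by (simp add: c_def Suc Rsuc power_inverse divide_inverse power_add mult_ac)
      also have "\<dots> = f (n,m)" using q by (simp add: field_simps)
      finally show ?thesis .
    qed
  qed
  then show ?thesis unfolding qp_lprincipal_def using c by blast
qed

lemma chi_fin:
  assumes g: "g \<in> qp_carrier"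
  shows "finite {j. chi q j g \<noteq> 0}"
proof -
  obtain N where N: "\<forall>n m. g (n,m) \<noteq> 0 \<longrightarrow> n \<le> N \<and> m \<le> N" using carrier_bound[OF g] by blast
  have "{j. chi q j g \<noteq> 0} \<subseteq> {..N}"
  proof
    fix j assume "j \<in> {j. chi q j g \<noteq> 0}"
    then have nz: "chi q j g \<noteq> 0" by simp
    have "\<exists>p. g p \<noteq> 0 \<and> snd p = j"
    proof (rule ccontr)
      assume "\<not> ?thesis"
      then have "chi q j g = 0" unfolding chi_def by (intro lin_vanish) auto
      with nz show False by simp
    qed
    then obtain p where p: "g p \<noteq> 0" "snd p = j" by blast
    then show "j \<in> {..N}" using N by (cases p) auto
  qed
  then show ?thesis by (rule finite_subset) simp
qed

definition yv :: "(nat \<Rightarrow> 'k::field) \<Rightarrow> nat \<times> nat \<Rightarrow> 'k" where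
  "yv v = (\<lambda>(n,m). if n = 0 then v m else 0)"

lemma yv_carrier:
  assumes "finite {j. v j \<noteq> 0}"
  shows "yv v \<in> qp_carrier"
proof -
  have "{p. yv v p \<noteq> 0} \<subseteq> {0} \<times> {j. v j \<noteq> 0}" by (auto simp: yv_def split: if_splits)
  then show ?thesis unfolding qp_carrier_def using assms by (auto intro: finite_subset)
qed

lemma chi_yv:
  assumes "finite {j. v j \<noteq> 0}"
  shows "chi q j (yv v) = v j"
proof -
  have "chi q j (yv v) = lin (\<lambda>p. if p = (0,j) then 1 else 0) (yv v)"
    unfolding chi_def by (rule lin_cong) (auto simp: yv_def split: if_splits)
  then show ?thesis using lin_coef_single[OF yv_carrier[OF assms], of "(0,j)" 1] by (simp add: yv_def)
qed

lemma lin_mult_decomp: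
  assumes y: "y \<in> qp_carrier"
  shows "finite S \<Longrightarrow> {p. r p \<noteq> 0} \<subseteq> S \<Longrightarrow>
    lin c (qp_mult q r y) = (\<Sum>p\<in>S. r p * lin c (qp_mult q (qp_mon (fst p) (snd p)) y))"
proof (induction S arbitrary: r rule: finite_induct)
  case empty
  then have r0: "r = 0" by (auto intro!: ext)
  show ?case unfolding r0 mult_zero_left lin_zero by simp
next
  case (insert a S)
  define r' where "r' = (\<lambda>x. if x = a then 0 else r x)"
  have r'S: "{p. r' p \<noteq> 0} \<subseteq> S" using insert.prems by (auto simp: r'_def)
  have r'c: "r' \<in> qp_carrier" unfolding qp_carrier_def using r'S insert.hyps(1) by (auto intro: finite_subset)
  have mc: "(\<lambda>x. r a * qp_mon (fst a) (snd a) x) \<in> qp_carrier" by (intro smul_carrier mon_carrier)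
  have r: "r = r' + (\<lambda>x. r a * qp_mon (fst a) (snd a) x)"
    by (rule ext) (auto simp: r'_def qp_mon_def)
  have "lin c (qp_mult q r y) = lin c (qp_mult q r' y) + r a * lin c (qp_mult q (qp_mon (fst a) (snd a)) y)"
  proof -
    have m1: "qp_mult q r' y \<in> qp_carrier" by (rule mult_carrier[OF r'c y])
    have m2: "qp_mult q (qp_mon (fst a) (snd a)) y \<in> qp_carrier" by (rule mult_carrier[OF mon_carrier y])
    show ?thesis
      by (subst r) (simp only: mult_add_left mult_smul_left lin_add[OF m1 smul_carrier[OF m2]] lin_smul[OF m2])
  qed
  also have "lin c (qp_mult q r' y) = (\<Sum>p\<in>S. r' p * lin c (qp_mult q (qp_mon (fst p) (snd p)) y))"
    by (rule insert.IH[OF r'S])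
  also have "\<dots> = (\<Sum>p\<in>S. r p * lin c (qp_mult q (qp_mon (fst p) (snd p)) y))"
    using insert.hyps(2) by (intro sum.cong refl) (auto simp: r'_def)
  finally show ?case using insert.hyps by (simp add: add.commute)
qed

lemma chi_mult_vanish:
  assumes q: "q \<noteq> 0" and r: "r \<in> qp_carrier" and y: "y \<in> qp_carrier"
    and z: "\<And>l. l < m \<Longrightarrow> chi q l y = 0" and j: "j < m"
  shows "chi q j (qp_mult q r y) = 0"
proof -
  have fin: "finite {p. r p \<noteq> 0}" using r by (simp add: qp_carrier_def)
  have "chi q j (qp_mult q r y) = (\<Sum>p\<in>{p. r p \<noteq> 0}. r p * chi q j (qp_mult q (qp_mon (fst p) (snd p)) y))"
    unfolding chi_def by (rule lin_mult_decomp[OF y fin]) simp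
  also have "\<dots> = 0"
  proof (intro sum.neutral ballI)
    fix p assume "p \<in> {p. r p \<noteq> 0}"
    show "r p * chi q j (qp_mult q (qp_mon (fst p) (snd p)) y) = 0"
      using z[of "j - snd p"] j by (simp add: chi_mon_left[OF q y])
  qed
  finally show ?thesis .
qed


definition QI :: "'k::field \<Rightarrow> (nat \<times> nat \<Rightarrow> 'k) set" where
  "QI q = qp_lprincipal q (qp_mon 1 0 - qp_one)"

definition Em :: "'k::field \<Rightarrow> nat \<Rightarrow> (nat \<times> nat \<Rightarrow> 'k) set set" where
  "Em q m = qp_quot_lmult q (QI q) (qp_pow q (qp_w q) m)"

lemma chi_zero: "chi q j 0 = 0"
  by (simp add: chi_def lin_zero)

lemma chi_add: "f \<in> qp_carrier \<Longrightarrow> g \<in> qp_carrier \<Longrightarrow> chi q j (f + g) = chi q j f + chi q j g"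
  by (simp add: chi_def lin_add)

lemma chi_diff: "f \<in> qp_carrier \<Longrightarrow> g \<in> qp_carrier \<Longrightarrow> chi q j (f - g) = chi q j f - chi q j g"
  by (simp add: chi_def lin_diff)

lemma chi_smul: "f \<in> qp_carrier \<Longrightarrow> chi q j (\<lambda>p. c * f p) = c * chi q j f"
  by (simp add: chi_def lin_smul)

lemma QI_char:
  assumes q: "q \<noteq> 0"
  shows "u \<in> QI q \<longleftrightarrow> u \<in> qp_carrier \<and> (\<forall>j. chi q j u = 0)"
proof
  assume "u \<in> QI q"
  then obtain c where c: "c \<in> qp_carrier" "u = qp_mult q c (qp_mon 1 0 - qp_one)"
    unfolding QI_def qp_lprincipal_def by blast
  then show "u \<in> qp_carrier \<and> (\<forall>j. chi q j u = 0)"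
    using chi_I[OF q c(1)] by (simp add: mult_carrier diff_carrier mon_carrier)
next
  assume "u \<in> qp_carrier \<and> (\<forall>j. chi q j u = 0)"
  then show "u \<in> QI q" unfolding QI_def using chi_complete[OF q] by blast
qed

lemma cls_eq:
  assumes q: "q \<noteq> 0" and y: "y \<in> qp_carrier" and z: "z \<in> qp_carrier"
  shows "qp_cls (QI q) y = qp_cls (QI q) z \<longleftrightarrow> (\<forall>j. chi q j y = chi q j z)"
proof
  assume eq: "qp_cls (QI q) y = qp_cls (QI q) z"
  have "0 \<in> QI q" using QI_char[OF q] zero_carrier chi_zero by blast
  then have "y \<in> qp_cls (QI q) y" unfolding qp_cls_def by force
  then have "y \<in> qp_cls (QI q) z" using eq by simp
  then obtain i where i: "i \<in> QI q" "y = z + i" unfolding qp_cls_def by blast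
  then have "y - z = i" by simp
  then have "\<forall>j. chi q j (y - z) = 0" using i(1) QI_char[OF q] by simp
  then show "\<forall>j. chi q j y = chi q j z" using chi_diff[OF y z] by simp
next
  assume h: "\<forall>j. chi q j y = chi q j z"
  have sub: "qp_cls (QI q) y \<subseteq> qp_cls (QI q) z" if y: "y \<in> qp_carrier" and z: "z \<in> qp_carrier" and h: "\<forall>j. chi q j y = chi q j z" for y z
  proof
    fix X assume "X \<in> qp_cls (QI q) y"
    then obtain i where i: "i \<in> QI q" "X = y + i" unfolding qp_cls_def by blast
    have ic: "i \<in> qp_carrier" and i0: "\<forall>j. chi q j i = 0" using i(1) QI_char[OF q] by auto
    have c1: "y - z + i \<in> qp_carrier" by (intro add_carrier diff_carrier y z ic)
    have "\<forall>j. chi q j (y - z + i) = 0"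
      using h i0 by (simp add: chi_add[OF diff_carrier[OF y z] ic] chi_diff[OF y z])
    then have "y - z + i \<in> QI q" using QI_char[OF q] c1 by blast
    moreover have "X = z + (y - z + i)" using i(2) by simp
    ultimately show "X \<in> qp_cls (QI q) z" unfolding qp_cls_def by blast
  qed
  show "qp_cls (QI q) y = qp_cls (QI q) z"
    using sub[OF y z h] sub[OF z y] h by auto
qed

lemma mult_mon_mm_11: "qp_mult q (qp_mon m m) (qp_mon 1 1) = (\<lambda>p. inverse q ^ m * qp_mon (Suc m) (Suc m) p)"
proof (rule ext)
  fix p :: "nat \<times> nat"
  obtain n k where p: "p = (n,k)" by (cases p)
  show "qp_mult q (qp_mon m m) (qp_mon 1 1) p = inverse q ^ m * qp_mon (Suc m) (Suc m) p"
    unfolding p mult_mon_right_pt by (auto simp: qp_mon_def)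
qed

lemma pow_w:
  assumes q: "q \<noteq> 0"
  shows "\<exists>s. s \<noteq> 0 \<and> qp_pow q (qp_w q) m = (\<lambda>p. s * qp_mon m m p)"
proof (induction m)
  case 0
  show ?case by (rule exI[of _ 1]) auto
next
  case (Suc m)
  then obtain s where s: "s \<noteq> 0" "qp_pow q (qp_w q) m = (\<lambda>p. s * qp_mon m m p)" by blast
  have "qp_pow q (qp_w q) (Suc m) = qp_mult q (qp_pow q (qp_w q) m) (qp_w q)"
    by (simp only: qp_pow.simps)
  also have "\<dots> = qp_mult q (\<lambda>p. s * qp_mon m m p) (qp_w q)"
    by (simp only: s(2))
  also have "\<dots> = qp_mult q (\<lambda>p. s * qp_mon m m p) (qp_mon 1 1)"
    by (simp only: w_eq)
  also have "\<dots> = (\<lambda>p. (s * inverse q ^ m) * qp_mon (Suc m) (Suc m) p)"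
    unfolding mult_smul_left mult_mon_mm_11 by (simp add: mult_ac)
  finally show ?case using s(1) q by (intro exI[of _ "s * inverse q ^ m"]) simp
qed

lemma memE:
  assumes q: "q \<noteq> 0" and g: "g \<in> qp_carrier"
  shows "qp_cls (QI q) g \<in> Em q m \<longleftrightarrow> (\<forall>j<m. chi q j g = 0)"
proof -
  obtain s where s: "s \<noteq> 0" "qp_pow q (qp_w q) m = (\<lambda>p. s * qp_mon m m p)" using pow_w[OF q] by blast
  have chiP: "chi q j (qp_mult q (\<lambda>p. s * qp_mon m m p) y) = s * (if m \<le> j then q ^ (m * j) * chi q (j - m) y else 0)"
    if y: "y \<in> qp_carrier" for y j
    by (simp add: mult_smul_left chi_smul mult_carrier mon_carrier y chi_mon_left[OF q y])
  have E: "Em q m = {qp_cls (QI q) (qp_mult q (\<lambda>p. s * qp_mon m m p) y) | y. y \<in> qp_carrier}"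
    unfolding Em_def qp_quot_lmult_def s(2) ..
  have Pc: "(\<lambda>p. s * qp_mon m m p) \<in> qp_carrier" by (intro smul_carrier mon_carrier)
  show ?thesis
  proof
    assume "qp_cls (QI q) g \<in> Em q m"
    then obtain y where y: "y \<in> qp_carrier" "qp_cls (QI q) g = qp_cls (QI q) (qp_mult q (\<lambda>p. s * qp_mon m m p) y)"
      unfolding E by blast
    have "\<forall>j. chi q j g = chi q j (qp_mult q (\<lambda>p. s * qp_mon m m p) y)"
      using cls_eq[OF q g mult_carrier[OF Pc y(1)]] y(2) by blast
    then show "\<forall>j<m. chi q j g = 0" using chiP[OF y(1)] by simp
  next
    assume z: "\<forall>j<m. chi q j g = 0"
    define v where "v = (\<lambda>l. chi q (l + m) g / (s * q ^ (m * (l + m))))"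
    have "{l. v l \<noteq> 0} \<subseteq> (\<lambda>l. l + m) -` {j. chi q j g \<noteq> 0}" by (auto simp: v_def)
    moreover have "finite ((\<lambda>l. l + m) -` {j. chi q j g \<noteq> 0})"
      by (rule finite_vimageI[OF chi_fin[OF g]]) (simp add: inj_on_def)
    ultimately have vf: "finite {l. v l \<noteq> 0}" by (rule finite_subset)
    have yc: "yv v \<in> qp_carrier" by (rule yv_carrier[OF vf])
    have "\<forall>j. chi q j g = chi q j (qp_mult q (\<lambda>p. s * qp_mon m m p) (yv v))"
    proof
      fix j
      show "chi q j g = chi q j (qp_mult q (\<lambda>p. s * qp_mon m m p) (yv v))"
      proof (cases "m \<le> j")
        case True
        then have jm: "j - m + m = j" by simp
        show ?thesis by (simp only: chiP[OF yc] chi_yv[OF vf]) (simp add: True v_def jm s(1) q)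
      next
        case False
        then show ?thesis using z by (simp add: chiP[OF yc])
      qed
    qed
    then have "qp_cls (QI q) g = qp_cls (QI q) (qp_mult q (\<lambda>p. s * qp_mon m m p) (yv v))"
      using cls_eq[OF q g mult_carrier[OF Pc yc]] by blast
    then show "qp_cls (QI q) g \<in> Em q m" unfolding E using yc by blast
  qed
qed

lemma Em_elem:
  assumes q: "q \<noteq> 0" and X: "X \<in> Em q m"
  shows "\<exists>g\<in>qp_carrier. X = qp_cls (QI q) g"
proof -
  obtain s where s: "s \<noteq> 0" "qp_pow q (qp_w q) m = (\<lambda>p. s * qp_mon m m p)" using pow_w[OF q] by blast
  have Pc: "(\<lambda>p. s * qp_mon m m p) \<in> qp_carrier" by (intro smul_carrier mon_carrier)
  obtain y where "y \<in> qp_carrier" "X = qp_cls (QI q) (qp_mult q (qp_pow q (qp_w q) m) y)"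
    using X unfolding Em_def qp_quot_lmult_def by blast
  then show ?thesis using mult_carrier[OF Pc] s(2) by auto
qed

lemma Em_sub: "q \<noteq> 0 \<Longrightarrow> Em q m \<subseteq> qp_quot (QI q)"
  using Em_elem unfolding qp_quot_def by blast

lemma Em_eq:
  assumes q: "q \<noteq> 0" and S: "S \<subseteq> qp_quot (QI q)"
    and h: "\<And>g. g \<in> qp_carrier \<Longrightarrow> qp_cls (QI q) g \<in> S \<longleftrightarrow> (\<forall>j<m. chi q j g = 0)"
  shows "S = Em q m"
proof (rule set_eqI)
  fix X
  show "X \<in> S \<longleftrightarrow> X \<in> Em q m"
  proof
    assume "X \<in> S"
    then obtain g where g: "g \<in> qp_carrier" "X = qp_cls (QI q) g" using S unfolding qp_quot_def by blast
    then show "X \<in> Em q m" using h[OF g(1)] memE[OF q g(1)] \<open>X \<in> S\<close> by simp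
  next
    assume "X \<in> Em q m"
    then obtain g where g: "g \<in> qp_carrier" "X = qp_cls (QI q) g" using Em_elem[OF q] by blast
    then show "X \<in> S" using h[OF g(1)] memE[OF q g(1)] \<open>X \<in> Em q m\<close> by simp
  qed
qed

lemma Em_submodule:
  fixes q :: "'k::field"
  assumes q: "q \<noteq> 0"
  shows "qp_quot_submodule q (QI q) (Em q m)"
  unfolding qp_quot_submodule_def
proof (intro conjI ballI impI)
  show "Em q m \<subseteq> qp_quot (QI q)" by (rule Em_sub[OF q])
  show "qp_cls (QI q) 0 \<in> Em q m" using memE[OF q zero_carrier] by (simp add: chi_zero)
next
  fix y z :: "nat \<times> nat \<Rightarrow> 'k" assume y: "y \<in> qp_carrier" and z: "z \<in> qp_carrier"
    and "qp_cls (QI q) y \<in> Em q m" "qp_cls (QI q) z \<in> Em q m"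
  then show "qp_cls (QI q) (y + z) \<in> Em q m"
    using memE[OF q add_carrier[OF y z]] memE[OF q y] memE[OF q z] by (simp add: chi_add[OF y z])
next
  fix r y :: "nat \<times> nat \<Rightarrow> 'k" assume r: "r \<in> qp_carrier" and y: "y \<in> qp_carrier" and "qp_cls (QI q) y \<in> Em q m"
  then have z: "\<forall>j<m. chi q j y = 0" using memE[OF q y] by simp
  show "qp_cls (QI q) (qp_mult q r y) \<in> Em q m"
    using memE[OF q mult_carrier[OF r y]] chi_mult_vanish[OF q r y] z by blast
qed

definition dv :: "nat \<Rightarrow> nat \<Rightarrow> 'k::field" where
  "dv m = (\<lambda>j. if j = m then 1 else 0)"

lemma dv_fin: "finite {j. (dv m j :: 'k::field) \<noteq> 0}"
  by (simp add: dv_def)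

lemma gm_props:
  fixes q :: "'k::field"
  shows "yv (dv m) \<in> (qp_carrier :: (nat \<times> nat \<Rightarrow> 'k) set)" "chi q j (yv (dv m)) = dv m j"
  using yv_carrier[OF dv_fin] chi_yv[OF dv_fin] by auto

lemma gm_c: "yv (dv m) \<in> (qp_carrier :: (nat \<times> nat \<Rightarrow> 'k::field) set)"
  by (rule yv_carrier[OF dv_fin])

lemma gm_chi: "chi q j (yv (dv m)) = (if j = m then 1 else (0::'k::field))"
  by (simp only: chi_yv[OF dv_fin]) (simp add: dv_def)

lemma Em_nonzero:
  assumes q: "q \<noteq> 0"
  shows "Em q m \<noteq> {qp_cls (QI q) 0}"
proof
  assume E: "Em q m = {qp_cls (QI q) 0}"
  have "qp_cls (QI q) (yv (dv m)) \<in> Em q m"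
    using memE[OF q gm_c[of m]] by (simp add: gm_chi)
  then have "qp_cls (QI q) (yv (dv m)) = qp_cls (QI q) 0" using E by simp
  then have "chi q m (yv (dv m)) = chi q m 0" using cls_eq[OF q gm_c[of m] zero_carrier] by blast
  then show False by (simp add: gm_chi chi_zero)
qed

lemma Em_strict:
  assumes q: "q \<noteq> 0"
  shows "Em q (Suc m) \<subset> Em q m"
proof
  show "Em q (Suc m) \<subseteq> Em q m"
  proof
    fix X assume X: "X \<in> Em q (Suc m)"
    then obtain g where g: "g \<in> qp_carrier" "X = qp_cls (QI q) g" using Em_elem[OF q] by blast
    then show "X \<in> Em q m" using memE[OF q g(1), of m] memE[OF q g(1), of "Suc m"] X by simp
  qed
  have "qp_cls (QI q) (yv (dv m)) \<in> Em q m"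
    using memE[OF q gm_c[of m]] by (simp add: gm_chi)
  moreover have "qp_cls (QI q) (yv (dv m)) \<notin> Em q (Suc m)"
    using memE[OF q gm_c[of m]] by (simp add: gm_chi)
  ultimately show "Em q (Suc m) \<noteq> Em q m" by blast
qed


lemma submodule_is_Em:
  fixes q :: "'k::field"
  assumes q: "q \<noteq> 0" and nr: "not_root_of_unity q"
    and S: "qp_quot_submodule q (QI q) S" and Sne: "S \<noteq> {qp_cls (QI q) 0}"
  shows "\<exists>m. S = Em q m"
proof -
  have Ssub: "S \<subseteq> qp_quot (QI q)" and S0: "qp_cls (QI q) 0 \<in> S"
    and Sadd: "\<And>y z. y \<in> qp_carrier \<Longrightarrow> z \<in> qp_carrier \<Longrightarrow> qp_cls (QI q) y \<in> S \<Longrightarrow> qp_cls (QI q) z \<in> S \<Longrightarrow> qp_cls (QI q) (y + z) \<in> S"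
    and Smul: "\<And>r y. r \<in> qp_carrier \<Longrightarrow> y \<in> qp_carrier \<Longrightarrow> qp_cls (QI q) y \<in> S \<Longrightarrow> qp_cls (QI q) (qp_mult q r y) \<in> S"
    using S unfolding qp_quot_submodule_def by blast+
  define V where "V = {(\<lambda>j. chi q j g) | g. g \<in> qp_carrier \<and> qp_cls (QI q) g \<in> S}"
  have Vmem: "\<And>g. g \<in> qp_carrier \<Longrightarrow> qp_cls (QI q) g \<in> S \<Longrightarrow> (\<lambda>j. chi q j g) \<in> V"
    unfolding V_def by blast
  have Vel: "\<exists>g. v = (\<lambda>j. chi q j g) \<and> g \<in> qp_carrier \<and> qp_cls (QI q) g \<in> S" if "v \<in> V" for v
    using that unfolding V_def by blast
  have Vadd: "(\<lambda>x. u x + v x) \<in> V" if uV: "u \<in> V" and vV: "v \<in> V" for u v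
  proof -
    obtain g where g: "u = (\<lambda>j. chi q j g)" "g \<in> qp_carrier" "qp_cls (QI q) g \<in> S" using Vel[OF uV] by blast
    obtain h where h: "v = (\<lambda>j. chi q j h)" "h \<in> qp_carrier" "qp_cls (QI q) h \<in> S" using Vel[OF vV] by blast
    have "(\<lambda>j. chi q j (g + h)) \<in> V" by (rule Vmem[OF add_carrier[OF g(2) h(2)] Sadd[OF g(2) h(2) g(3) h(3)]])
    then show ?thesis by (simp add: g(1) h(1) chi_add[OF g(2) h(2)])
  qed
  have Vsc: "(\<lambda>x. c * v x) \<in> V" if vV: "v \<in> V" for c v
  proof -
    obtain g where g: "v = (\<lambda>j. chi q j g)" "g \<in> qp_carrier" "qp_cls (QI q) g \<in> S" using Vel[OF vV] by blast
    have e: "qp_mult q (\<lambda>p. c * qp_one p) g = (\<lambda>p. c * g p)" by (simp add: mult_smul_left mult_one_left)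
    have "qp_cls (QI q) (\<lambda>p. c * g p) \<in> S"
      using Smul[OF smul_carrier[OF mon_carrier] g(2) g(3), of c 0 0] unfolding e .
    then have "(\<lambda>j. chi q j (\<lambda>p. c * g p)) \<in> V" by (rule Vmem[OF smul_carrier[OF g(2)]])
    then show ?thesis by (simp add: g(1) chi_smul[OF g(2)])
  qed
  have VT: "(\<lambda>x. q ^ x * v x) \<in> V" if vV: "v \<in> V" for v
  proof -
    obtain g where g: "v = (\<lambda>j. chi q j g)" "g \<in> qp_carrier" "qp_cls (QI q) g \<in> S" using Vel[OF vV] by blast
    have "(\<lambda>j. chi q j (qp_mult q (qp_mon 1 0) g)) \<in> V"
      by (rule Vmem[OF mult_carrier[OF mon_carrier g(2)] Smul[OF mon_carrier g(2) g(3)]])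
    moreover have "(\<lambda>j. chi q j (qp_mult q (qp_mon 1 0) g)) = (\<lambda>x. q ^ x * v x)"
      by (rule ext) (simp add: chi_mon_left[OF q g(2)] g(1))
    ultimately show ?thesis by simp
  qed
  have Vshift: "(\<lambda>x. if 1 \<le> x then v (x - 1) else 0) \<in> V" if vV: "v \<in> V" for v
  proof -
    obtain g where g: "v = (\<lambda>j. chi q j g)" "g \<in> qp_carrier" "qp_cls (QI q) g \<in> S" using Vel[OF vV] by blast
    have "(\<lambda>j. chi q j (qp_mult q (qp_mon 0 1) g)) \<in> V"
      by (rule Vmem[OF mult_carrier[OF mon_carrier g(2)] Smul[OF mon_carrier g(2) g(3)]])
    moreover have "(\<lambda>j. chi q j (qp_mult q (qp_mon 0 1) g)) = (\<lambda>x. if 1 \<le> x then v (x - 1) else 0)"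
      by (rule ext) (simp add: chi_mon_left[OF q g(2)] g(1))
    ultimately show ?thesis by simp
  qed
  have Vfin: "finite {x. v x \<noteq> 0}" if vV: "v \<in> V" for v
    using Vel[OF vV] chi_fin by blast
  have V0: "(\<lambda>x. 0) \<in> V"
    using Vmem[OF zero_carrier S0] by (simp add: chi_zero)
  obtain X where X: "X \<in> S" "X \<noteq> qp_cls (QI q) 0" using Sne S0 by blast
  obtain g0 where g0: "g0 \<in> qp_carrier" "X = qp_cls (QI q) g0" using X(1) Ssub unfolding qp_quot_def by blast
  have "\<exists>j. chi q j g0 \<noteq> 0"
  proof (rule ccontr)
    assume "\<not> ?thesis"
    then have "qp_cls (QI q) g0 = qp_cls (QI q) 0" using cls_eq[OF q g0(1) zero_carrier] by (simp add: chi_zero)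
    then show False using X g0 by simp
  qed
  then obtain j0 where j0: "chi q j0 g0 \<noteq> 0" by blast
  have g0V: "(\<lambda>j. chi q j g0) \<in> V" using Vmem[OF g0(1)] X(1) g0(2) by simp
  have ex: "\<exists>j. \<exists>v\<in>V. v j \<noteq> 0"
  proof (intro exI bexI)
    show "(\<lambda>j. chi q j g0) \<in> V" by (rule g0V)
    show "(\<lambda>j. chi q j g0) j0 \<noteq> 0" using j0 by simp
  qed
  define m where "m = (LEAST j. \<exists>v\<in>V. v j \<noteq> 0)"
  have mex: "\<exists>v\<in>V. v m \<noteq> 0" unfolding m_def by (rule LeastI_ex[OF ex])
  have mle: "m \<le> j" if "v \<in> V" "v j \<noteq> 0" for v j
    unfolding m_def using that by (intro Least_le) blast
  obtain vm where vm: "vm \<in> V" "vm m \<noteq> 0" using mex by blast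
  have dm: "(\<lambda>x. if x = m then 1 else 0) \<in> V"
  proof (rule eigen_isolate[where \<theta> = "\<lambda>x. q ^ x" and B = UNIV, OF _ _ _ _ _ _ vm])
    show "inj_on (\<lambda>x. q ^ x) UNIV" using pow_inj[OF q nr] by (auto simp: inj_on_def)
  qed (auto intro: Vadd Vsc VT Vfin)
  have dj: "(\<lambda>x. if x = m + t then 1 else 0) \<in> V" for t
  proof (induction t)
    case 0 then show ?case using dm by simp
  next
    case (Suc t)
    have "(\<lambda>x. if 1 \<le> x then (if x - 1 = m + t then 1 else 0) else 0) \<in> V" by (rule Vshift[OF Suc])
    moreover have "(\<lambda>x. if 1 \<le> x then (if x - 1 = m + t then 1 else 0) else 0) = (\<lambda>x. if x = m + Suc t then 1 else (0::'k))"
      by (rule ext) auto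
    ultimately show ?case by simp
  qed
  have sums: "finite F \<Longrightarrow> F \<subseteq> {m..} \<Longrightarrow> (\<lambda>x. \<Sum>j\<in>F. if x = j then c j else 0) \<in> V" for F c
  proof (induction F rule: finite_induct)
    case empty then show ?case using V0 by simp
  next
    case (insert a F)
    obtain t where t: "a = m + t" using insert.prems by (metis atLeast_iff insert_subset le_Suc_ex)
    have "(\<lambda>x. c a * (if x = a then 1 else 0)) \<in> V" using Vsc[OF dj[of t]] t by simp
    then have "(\<lambda>x. (\<lambda>x. c a * (if x = a then 1 else 0)) x + (\<lambda>x. \<Sum>j\<in>F. if x = j then c j else 0) x) \<in> V"
      using Vadd insert by blast
    moreover have "(\<lambda>x. (\<lambda>x. c a * (if x = a then 1 else 0)) x + (\<lambda>x. \<Sum>j\<in>F. if x = j then c j else 0) x) = (\<lambda>x. \<Sum>j\<in>insert a F. if x = j then c j else 0)"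
      using insert.hyps by (auto intro!: ext)
    ultimately show ?case by simp
  qed
  have char: "qp_cls (QI q) g \<in> S \<longleftrightarrow> (\<forall>j<m. chi q j g = 0)" if g: "g \<in> qp_carrier" for g
  proof
    assume "qp_cls (QI q) g \<in> S"
    then have "(\<lambda>j. chi q j g) \<in> V" by (rule Vmem[OF g])
    then show "\<forall>j<m. chi q j g = 0" using mle by force
  next
    assume z: "\<forall>j<m. chi q j g = 0"
    have "{j. chi q j g \<noteq> 0} \<subseteq> {m..}" using z by (auto simp: not_less[symmetric])
    then have "(\<lambda>x. \<Sum>j\<in>{j. chi q j g \<noteq> 0}. if x = j then chi q j g else 0) \<in> V"
      by (intro sums chi_fin g)
    moreover have "(\<lambda>x. \<Sum>j\<in>{j. chi q j g \<noteq> 0}. if x = j then chi q j g else 0) = (\<lambda>j. chi q j g)"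
      using chi_fin[OF g] by (auto intro!: ext)
    ultimately have "(\<lambda>j. chi q j g) \<in> V" by simp
    then obtain g' where g': "(\<lambda>j. chi q j g) = (\<lambda>j. chi q j g')" "g' \<in> qp_carrier" "qp_cls (QI q) g' \<in> S"
      using Vel by blast
    have "qp_cls (QI q) g = qp_cls (QI q) g'" using cls_eq[OF q g g'(2)] g'(1) by metis
    then show "qp_cls (QI q) g \<in> S" using g'(3) by simp
  qed
  have "S = Em q m" by (rule Em_eq[OF q Ssub char])
  then show ?thesis by blast
qed

theorem proposition3p2:
  fixes q :: "'k::field"
  assumes "q \<noteq> 0" and "not_root_of_unity q"
  defines "J \<equiv> qp_lprincipal q (qp_w q - qp_one)"
      and "x \<equiv> (qp_a - qp_one :: nat \<times> nat \<Rightarrow> 'k)"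
  defines "I \<equiv> qp_lprincipal q x"
  shows "(qp_maximal_left_ideal q J
          \<and> (\<forall>m c. c \<in> qp_carrier \<longrightarrow> qp_mult q ((qp_sigma q ^^ m) x) c - qp_one \<notin> J))
       \<and> (\<not> qp_quot_artinian q I
          \<and> (\<forall>S. (qp_quot_submodule q I S \<and> S \<noteq> {qp_cls I 0})
                 \<longleftrightarrow> (\<exists>m. S = qp_quot_lmult q I (qp_pow q (qp_w q) m)))
          \<and> (\<forall>m. qp_quot_lmult q I (qp_pow q (qp_w q) (Suc m))
                 \<subset> qp_quot_lmult q I (qp_pow q (qp_w q) m)))"
proof -
  have q: "q \<noteq> 0" and nr: "not_root_of_unity q" by fact+
  have I: "I = QI q" unfolding I_def x_def QI_def ..
  have E: "\<And>m. qp_quot_lmult q I (qp_pow q (qp_w q) m) = Em q m" unfolding I Em_def ..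
  have A1: "qp_maximal_left_ideal q J" unfolding J_def by (rule maximal_J[OF q nr])
  have A2: "\<forall>m c. c \<in> qp_carrier \<longrightarrow> qp_mult q ((qp_sigma q ^^ m) x) c - qp_one \<notin> J"
  proof (intro allI impI)
    fix m and c :: "nat \<times> nat \<Rightarrow> 'k" assume c: "c \<in> qp_carrier"
    show "qp_mult q ((qp_sigma q ^^ m) x) c - qp_one \<notin> J"
      unfolding J_def x_def by (rule partA2[OF q c])
  qed
  have B1: "\<not> qp_quot_artinian q I"
  proof
    assume art: "qp_quot_artinian q I"
    have h1: "(\<forall>n. qp_quot_submodule q I (Em q n)) \<and> (\<forall>n. Em q (Suc n) \<subseteq> Em q n)"
    proof (intro conjI allI)
      fix n show "qp_quot_submodule q I (Em q n)" unfolding I by (rule Em_submodule[OF q])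
      show "Em q (Suc n) \<subseteq> Em q n" using Em_strict[OF q, of n] by (rule less_imp_le)
    qed
    note AS = art[unfolded qp_quot_artinian_def, THEN spec[where x = "Em q"]]
    have "\<exists>n. \<forall>k\<ge>n. Em q k = Em q n" using AS h1 by (rule mp)
    then obtain n where "\<forall>k\<ge>n. Em q k = Em q n" by (elim exE)
    then have "Em q (Suc n) = Em q n" by (erule_tac allE[of _ "Suc n"]) simp
    then show False using Em_strict[OF q, of n] by simp
  qed
  have B2: "\<forall>S. (qp_quot_submodule q I S \<and> S \<noteq> {qp_cls I 0}) \<longleftrightarrow> (\<exists>m. S = qp_quot_lmult q I (qp_pow q (qp_w q) m))"
  proof (intro allI iffI)
    fix S assume "qp_quot_submodule q I S \<and> S \<noteq> {qp_cls I 0}"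
    then have "\<exists>m. S = Em q m" unfolding I by (intro submodule_is_Em[OF q nr]) auto
    then show "\<exists>m. S = qp_quot_lmult q I (qp_pow q (qp_w q) m)" unfolding E .
  next
    fix S assume "\<exists>m. S = qp_quot_lmult q I (qp_pow q (qp_w q) m)"
    then obtain m where "S = Em q m" unfolding E by (elim exE)
    then show "qp_quot_submodule q I S \<and> S \<noteq> {qp_cls I 0}"
      unfolding I using Em_submodule[OF q, of m] Em_nonzero[OF q, of m] by simp
  qed
  have B3: "\<forall>m. qp_quot_lmult q I (qp_pow q (qp_w q) (Suc m)) \<subset> qp_quot_lmult q I (qp_pow q (qp_w q) m)"
    unfolding E using Em_strict[OF q] by (intro allI)
  show ?thesis using A1 A2 B1 B2 B3 by blast
qed


end
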